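(* In the setting described in the context, for all $(x_1,L_1),(x_2,L_2),(x_3,L_3)\in\mathcal E_\varphi$ with $x_1,x_2,x_3$ pairwise distinct, $\beta_n(L_1,L_2,L_3)=n\beta_1(x_1,x_2,x_3)$.
   Context: $V$ real symplectic of dimension $2n$, $\mathcal L(V)$ its Lagrangian Grassmannian, $\Gamma<\mathrm{PU}(1,1)$ a torsion-free cocompact lattice acting on $\mathbb S^1=\partial\mathcal D_{1,1}$, $\rho:\Gamma\to\mathrm{Sp}(V)$ a homomorphism, and $\varphi:\mathbb S^1\to\mathcal L(V)$ a $\rho$-equivariant measurable map such that (i) $\beta_n(\varphi(x),\varphi(y),\varphi(z))=n\beta_1(x,y,z)$ for Lebesgue-a.e. $(x,y,z)$, and (ii) for every $L\in\mathcal L(V)$ the set of $x$ with $\varphi(x)\cap L\neq0$ has Lebesgue measure zero. Here $\beta_n(L_1,L_2,L_3)$ is the signature of $(x_1,x_2,x_3)\mapsto\langle x_1,x_2\rangle+\langle x_2,x_3\rangle+\langle x_3,x_1\rangle$ on $L_1\oplus L_2\oplus L_3$, and $\beta_1(x,y,z)=\pm1$ for pairwise distinct positively/negatively cyclically ordered triples in $\mathbb S^1$, $0$ otherwise. The essential graph $\mathcal E_\varphi\subset\mathbb S^1\times\mathcal L(V)$ is the support of the pushforward of Lebesgue measure under $x\mapsto(x,\varphi(x))$. *)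

theory Defs
  imports "HOL-Analysis.Analysis"
begin

type_synonym 'n sympl = "(real^'n) \<times> (real^'n)"

text \<open>Standard symplectic form (every real symplectic space of dim 2n is isomorphic to this).\<close>
definition omega :: "'n::finite sympl \<Rightarrow> 'n sympl \<Rightarrow> real" where
  "omega v w = fst v \<bullet> snd w - snd v \<bullet> fst w"

definition lagrangians :: "'n::finite sympl set set" where
  "lagrangians = {L. subspace L \<and> dim L = CARD('n) \<and> (\<forall>x\<in>L. \<forall>y\<in>L. omega x y = 0)}"

definition Sp :: "('n::finite sympl \<Rightarrow> 'n sympl) set" where
  "Sp = {g. linear g \<and> bij g \<and> (\<forall>v w. omega (g v) (g w) = omega v w)}"

text \<open>Gap distance between subspaces; it induces the usual topology on the Grassmannian.\<close>
definition lagdist :: "'n::finite sympl set \<Rightarrow> 'n sympl set \<Rightarrow> real" where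
  "lagdist L M = max (SUP x\<in>L \<inter> sphere 0 1. infdist x M) (SUP y\<in>M \<inter> sphere 0 1. infdist y L)"

definition lag_open :: "'n::finite sympl set set \<Rightarrow> bool" where
  "lag_open U \<longleftrightarrow> U \<subseteq> lagrangians \<and>
     (\<forall>L\<in>U. \<exists>e>0. \<forall>M\<in>lagrangians. lagdist L M < e \<longrightarrow> M \<in> U)"

definition pos_index :: "('a::euclidean_space \<Rightarrow> real) \<Rightarrow> 'a set \<Rightarrow> nat" where
  "pos_index Q W = Max {dim U | U. subspace U \<and> U \<subseteq> W \<and> (\<forall>x\<in>U. x \<noteq> 0 \<longrightarrow> Q x > 0)}"

definition quad_signature :: "('a::euclidean_space \<Rightarrow> real) \<Rightarrow> 'a set \<Rightarrow> int" where
  "quad_signature Q W = int (pos_index Q W) - int (pos_index (\<lambda>x. - Q x) W)"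

definition maslov :: "'n::finite sympl set \<Rightarrow> 'n sympl set \<Rightarrow> 'n sympl set \<Rightarrow> int" where
  "maslov L1 L2 L3 = quad_signature
     (\<lambda>(x1, x2, x3). omega x1 x2 + omega x2 x3 + omega x3 x1) (L1 \<times> L2 \<times> L3)"

definition ccw :: "complex \<Rightarrow> complex \<Rightarrow> complex \<Rightarrow> bool" where
  "ccw x y z \<longleftrightarrow> (\<exists>t1 t2 t3. t1 < t2 \<and> t2 < t3 \<and> t3 < t1 + 2 * pi \<and>
                     x = cis t1 \<and> y = cis t2 \<and> z = cis t3)"

definition beta1 :: "complex \<Rightarrow> complex \<Rightarrow> complex \<Rightarrow> int" where
  "beta1 x y z = (if x \<noteq> y \<and> y \<noteq> z \<and> x \<noteq> z then
                    (if ccw x y z then 1 else if ccw z y x then -1 else 0) else 0)"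

text \<open>(a,b) stands for the matrix [[a,b],[cnj b, cnj a]] with |a|^2-|b|^2=1.\<close>
definition SU11 :: "(complex \<times> complex) set" where
  "SU11 = {(a, b). (cmod a)\<^sup>2 - (cmod b)\<^sup>2 = 1}"

definition su_mult :: "complex \<times> complex \<Rightarrow> complex \<times> complex \<Rightarrow> complex \<times> complex" where
  "su_mult p q = (fst p * fst q + snd p * cnj (snd q), fst p * snd q + snd p * cnj (fst q))"

definition su_inv :: "complex \<times> complex \<Rightarrow> complex \<times> complex" where
  "su_inv p = (cnj (fst p), - snd p)"

fun su_pow :: "complex \<times> complex \<Rightarrow> nat \<Rightarrow> complex \<times> complex" where
  "su_pow p 0 = (1, 0)"
| "su_pow p (Suc m) = su_mult p (su_pow p m)"

definition mob :: "complex \<times> complex \<Rightarrow> complex \<Rightarrow> complex" where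
  "mob p z = (fst p * z + snd p) / (cnj (snd p) * z + cnj (fst p))"

text \<open>A torsion-free cocompact lattice in PU(1,1), given by its preimage G in SU(1,1)
  (so G contains -1).  A discrete cocompact subgroup is automatically a lattice.\<close>
definition tf_cocompact_lattice :: "(complex \<times> complex) set \<Rightarrow> bool" where
  "tf_cocompact_lattice G \<longleftrightarrow>
     G \<subseteq> SU11 \<and> (1, 0) \<in> G \<and> (-1, 0) \<in> G \<and>
     (\<forall>g\<in>G. \<forall>h\<in>G. su_mult g h \<in> G) \<and> (\<forall>g\<in>G. su_inv g \<in> G) \<and>
     (\<exists>e>0. \<forall>g\<in>G. dist g (1, 0) < e \<longrightarrow> g = (1, 0)) \<and>
     (\<exists>K. compact K \<and> K \<subseteq> SU11 \<and> (\<forall>s\<in>SU11. \<exists>g\<in>G. \<exists>k\<in>K. s = su_mult g k)) \<and>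
     (\<forall>g\<in>G. \<forall>m>0. su_pow g m \<in> {(1, 0), (-1, 0)} \<longrightarrow> g \<in> {(1, 0), (-1, 0)})"

text \<open>Homomorphism Gamma -> Sp(V) (factoring through PU(1,1)).\<close>
definition is_rep :: "(complex \<times> complex) set \<Rightarrow> (complex \<times> complex \<Rightarrow> 'n::finite sympl \<Rightarrow> 'n sympl) \<Rightarrow> bool" where
  "is_rep G \<rho> \<longleftrightarrow> (\<forall>g\<in>G. \<rho> g \<in> Sp) \<and> (\<forall>g\<in>G. \<forall>h\<in>G. \<rho> (su_mult g h) = \<rho> g \<circ> \<rho> h) \<and>
     \<rho> (-1, 0) = id"

definition lag_measurable :: "(complex \<Rightarrow> 'n::finite sympl set) \<Rightarrow> bool" where
  "lag_measurable \<phi> \<longleftrightarrow> (\<forall>x\<in>sphere 0 1. \<phi> x \<in> lagrangians) \<and>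
     (\<forall>U. lag_open U \<longrightarrow> {t \<in> {0..<2*pi}. \<phi> (cis t) \<in> U} \<in> sets lebesgue)"

text \<open>Support of the push-forward of Lebesgue measure under x -> (x, phi x), in S^1 x L(V).\<close>
definition ess_graph :: "(complex \<Rightarrow> 'n::finite sympl set) \<Rightarrow> (complex \<times> 'n sympl set) set" where
  "ess_graph \<phi> = {(x, L). x \<in> sphere 0 1 \<and> L \<in> lagrangians \<and>
     (\<forall>e>0. \<not> (AE t in lebesgue. t \<in> {0..<2*pi} \<longrightarrow>
                 \<not> (dist (cis t) x < e \<and> lagdist (\<phi> (cis t)) L < e)))}"

end

theory Submission
  imports Defs
begin


definition Jm :: "'n::finite sympl \<Rightarrow> 'n sympl" where "Jm v = (- snd v, fst v)"

lemma omega_J: "omega v w = Jm v \<bullet> w"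
  by (cases v; cases w) (simp add: omega_def Jm_def inner_Pair inner_commute)

lemma linear_Jm: "linear Jm"
  by (rule linearI) (auto simp: Jm_def)

lemma inj_Jm: "inj Jm"
  by (rule injI) (auto simp: Jm_def prod_eq_iff)

lemma omega_add_left[simp]: "omega (x + y) z = omega x z + omega y z"
  by (simp add: omega_def inner_add_left inner_add_right)
lemma omega_add_right[simp]: "omega z (x + y) = omega z x + omega z y"
  by (simp add: omega_def inner_add_left inner_add_right)
lemma omega_diff_left[simp]: "omega (x - y) z = omega x z - omega y z"
  by (simp add: omega_def inner_diff_left inner_diff_right)
lemma omega_diff_right[simp]: "omega z (x - y) = omega z x - omega z y"
  by (simp add: omega_def inner_diff_left inner_diff_right)
lemma omega_minus_left[simp]: "omega (- x) z = - omega x z"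
  by (simp add: omega_def)
lemma omega_minus_right[simp]: "omega z (- x) = - omega z x"
  by (simp add: omega_def)
lemma omega_scale_left[simp]: "omega (c *\<^sub>R x) z = c * omega x z"
  by (simp add: omega_def algebra_simps)
lemma omega_scale_right[simp]: "omega z (c *\<^sub>R x) = c * omega z x"
  by (simp add: omega_def algebra_simps)
lemma omega_zero_left[simp]: "omega 0 z = 0"
  by (simp add: omega_def)
lemma omega_zero_right[simp]: "omega z 0 = 0"
  by (simp add: omega_def)
lemma omega_antisym: "omega x y = - omega y x"
  by (simp add: omega_def inner_commute)
lemma omega_self[simp]: "omega x x = 0"
  by (simp add: omega_def inner_commute)

lemma tendsto_omega[tendsto_intros]:
  "(f \<longlongrightarrow> a) F \<Longrightarrow> (g \<longlongrightarrow> b) F \<Longrightarrow> ((\<lambda>x. omega (f x) (g x)) \<longlongrightarrow> omega a b) F"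
  unfolding omega_def by (intro tendsto_intros)

lemma DIM_sympl: "DIM('n::finite sympl) = 2 * CARD('n)"
  by simp

lemma dim_zero_set: "dim {0::'a::euclidean_space} = 0"
  by (metis dim_span span_empty dim_empty)

lemma dim_Int_zero:
  fixes S T :: "'a::euclidean_space set"
  assumes "subspace S" "subspace T" "S \<inter> T \<subseteq> {0}"
  shows "dim {x + y |x y. x \<in> S \<and> y \<in> T} = dim S + dim T"
proof -
  have "S \<inter> T = {0}" using assms subspace_0 by auto
  then show ?thesis using dim_sums_Int[OF assms(1,2)] dim_zero_set by simp
qed

lemma dim_Int_zero_le:
  fixes S T W :: "'a::euclidean_space set"
  assumes "subspace S" "subspace T" "S \<inter> T \<subseteq> {0}" "S \<subseteq> W" "T \<subseteq> W" "subspace W"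
  shows "dim S + dim T \<le> dim W"
proof -
  have "{x + y |x y. x \<in> S \<and> y \<in> T} \<subseteq> W" using assms(4,5,6) subspace_add by blast
  then have "dim {x + y |x y. x \<in> S \<and> y \<in> T} \<le> dim W" by (rule dim_subset)
  then show ?thesis using dim_Int_zero[OF assms(1-3)] by simp
qed

lemma isotropic_dim:
  fixes W :: "'n::finite sympl set"
  assumes sW: "subspace W" and iso: "\<forall>x\<in>W. \<forall>y\<in>W. omega x y = 0"
  shows "dim W \<le> CARD('n)"
proof -
  have s2: "subspace (Jm ` W)" by (rule linear_subspace_image[OF linear_Jm sW])
  have d2: "dim (Jm ` W) = dim W"
    by (rule dim_image_eq[OF linear_Jm]) (meson inj_Jm inj_on_subset subset_UNIV)
  have "W \<inter> Jm ` W \<subseteq> {0}"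
  proof
    fix z assume z: "z \<in> W \<inter> Jm ` W"
    then obtain x where x: "x \<in> W" "z = Jm x" by auto
    have "z \<bullet> z = omega x z" using x by (simp add: omega_J)
    also have "\<dots> = 0" using iso x z by auto
    finally show "z \<in> {0}" by simp
  qed
  from dim_Int_zero_le[OF sW s2 this subset_UNIV subset_UNIV subspace_UNIV]
  have "dim W + dim (Jm ` W) \<le> dim (UNIV :: 'n sympl set)" .
  then show ?thesis using d2 by (simp add: dim_UNIV)
qed

lemma lag_subspace: "L \<in> lagrangians \<Longrightarrow> subspace L"
  by (simp add: lagrangians_def)
lemma lag_dim: "L \<in> lagrangians \<Longrightarrow> dim L = CARD('n)" for L :: "'n::finite sympl set"
  by (simp add: lagrangians_def)
lemma lag_iso: "L \<in> lagrangians \<Longrightarrow> x \<in> L \<Longrightarrow> y \<in> L \<Longrightarrow> omega x y = 0"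
  by (simp add: lagrangians_def)
lemma lag_0: "L \<in> lagrangians \<Longrightarrow> 0 \<in> L"
  by (simp add: lagrangians_def subspace_0)

lemma lag_maximal:
  fixes L :: "'n::finite sympl set"
  assumes L: "L \<in> lagrangians" and z: "\<forall>y\<in>L. omega y z = 0"
  shows "z \<in> L"
proof -
  let ?W = "span (insert z L)"
  have sL: "subspace L" using L by (rule lag_subspace)
  have iso: "\<forall>x\<in>?W. \<forall>y\<in>?W. omega x y = 0"
  proof (intro ballI)
    fix x y assume x: "x \<in> ?W" and y: "y \<in> ?W"
    have spL: "span L = L" using sL by (simp add: span_eq_iff)
    from x obtain k where k: "x - k *\<^sub>R z \<in> L"
      using span_insert[of z L] spL by auto
    from y obtain k' where k': "y - k' *\<^sub>R z \<in> L"
      using span_insert[of z L] spL by auto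
    define a where "a = x - k *\<^sub>R z"
    define b where "b = y - k' *\<^sub>R z"
    have xa: "x = a + k *\<^sub>R z" and yb: "y = b + k' *\<^sub>R z" by (simp_all add: a_def b_def)
    have "omega a b = 0" using L k k' a_def b_def lag_iso by blast
    moreover have "omega a z = 0" using z k a_def by blast
    moreover have "omega z b = 0" using z k' b_def omega_antisym[of z b] by auto
    ultimately show "omega x y = 0" unfolding xa yb by simp
  qed
  have "dim ?W \<le> CARD('n)" by (rule isotropic_dim[OF subspace_span iso])
  then have "dim ?W \<le> dim L" using lag_dim[OF L] by simp
  moreover have "L \<subseteq> ?W" by (auto intro: span_base)
  ultimately have "L = ?W" using subspace_dim_equal[OF sL subspace_span] by auto
  then show ?thesis by (metis insertI1 span_base)
qed

lemma lag_maximal':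
  fixes L :: "'n::finite sympl set"
  assumes L: "L \<in> lagrangians" and z: "\<forall>y\<in>L. omega z y = 0"
  shows "z \<in> L"
  using lag_maximal[OF L] z omega_antisym by (metis neg_equal_0_iff_equal)

lemma transverse_sum:
  fixes A B :: "'n::finite sympl set"
  assumes A: "A \<in> lagrangians" and B: "B \<in> lagrangians" and t: "A \<inter> B = {0}"
  shows "\<exists>a\<in>A. \<exists>b\<in>B. z = a + b"
proof -
  have "dim {x + y |x y. x \<in> A \<and> y \<in> B} = 2 * CARD('n)"
    using dim_Int_zero[OF lag_subspace[OF A] lag_subspace[OF B]] t lag_dim[OF A] lag_dim[OF B] by simp
  moreover have "subspace {x + y |x y. x \<in> A \<and> y \<in> B}"
    using subspace_sums[OF lag_subspace[OF A] lag_subspace[OF B]] by simp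
  ultimately have "{x + y |x y. x \<in> A \<and> y \<in> B} = UNIV"
    using subspace_dim_equal[of "{x + y |x y. x \<in> A \<and> y \<in> B}" UNIV]
    by (simp add: dim_UNIV)
  then show ?thesis by blast
qed


lemma pos_index_finite:
  "finite {dim U | U. subspace U \<and> U \<subseteq> W \<and> (\<forall>x\<in>U. x \<noteq> 0 \<longrightarrow> Q x > 0)}"
  for W :: "'a::euclidean_space set"
proof (rule finite_subset[of _ "{..DIM('a)}"])
  show "{dim U | U. subspace U \<and> U \<subseteq> W \<and> (\<forall>x\<in>U. x \<noteq> 0 \<longrightarrow> Q x > 0)} \<subseteq> {..DIM('a)}"
    using dim_subset_UNIV by (auto simp: dim_UNIV)
qed simp

lemma pos_index_ge:
  fixes Q :: "'a::euclidean_space \<Rightarrow> real"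
  assumes "subspace U" "U \<subseteq> W" "\<forall>x\<in>U. x \<noteq> 0 \<longrightarrow> Q x > 0"
  shows "dim U \<le> pos_index Q W"
  unfolding pos_index_def
  by (rule Max_ge[OF pos_index_finite]) (use assms in blast)

lemma pos_index_nonempty:
  fixes W :: "'a::euclidean_space set"
  assumes "0 \<in> W"
  shows "{dim U | U. subspace U \<and> U \<subseteq> W \<and> (\<forall>x\<in>U. x \<noteq> 0 \<longrightarrow> Q x > 0)} \<noteq> {}"
  using assms subspace_single_0 by blast

lemma pos_index_le:
  fixes Q :: "'a::euclidean_space \<Rightarrow> real"
  assumes "0 \<in> W" "\<And>U. subspace U \<Longrightarrow> U \<subseteq> W \<Longrightarrow> (\<forall>x\<in>U. x \<noteq> 0 \<longrightarrow> Q x > 0) \<Longrightarrow> dim U \<le> k"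
  shows "pos_index Q W \<le> k"
  unfolding pos_index_def
  by (rule Max.boundedI[OF pos_index_finite pos_index_nonempty[OF assms(1)]]) (use assms(2) in blast)

lemma pos_index_attained:
  fixes Q :: "'a::euclidean_space \<Rightarrow> real"
  assumes "0 \<in> W"
  shows "\<exists>U. subspace U \<and> U \<subseteq> W \<and> (\<forall>x\<in>U. x \<noteq> 0 \<longrightarrow> Q x > 0) \<and> dim U = pos_index Q W"
proof -
  have "pos_index Q W \<in> {dim U | U. subspace U \<and> U \<subseteq> W \<and> (\<forall>x\<in>U. x \<noteq> 0 \<longrightarrow> Q x > 0)}"
    unfolding pos_index_def by (rule Max_in[OF pos_index_finite pos_index_nonempty[OF assms(1)]])
  then show ?thesis by auto
qed

section \<open>Sylvester\<close>

lemma sylvester: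
  fixes \<beta> :: "'a::euclidean_space \<Rightarrow> 'a \<Rightarrow> real"
  assumes sA: "subspace A"
    and lin1: "\<And>y. linear (\<lambda>x. \<beta> x y)" and lin2: "\<And>x. linear (\<beta> x)"
    and sym: "\<And>x y. x \<in> A \<Longrightarrow> y \<in> A \<Longrightarrow> \<beta> x y = \<beta> y x"
    and nd: "\<And>y. y \<in> A \<Longrightarrow> (\<forall>x\<in>A. \<beta> x y = 0) \<Longrightarrow> y = 0"
  shows "\<exists>X Y. subspace X \<and> subspace Y \<and> X \<subseteq> A \<and> Y \<subseteq> A \<and>
     (\<forall>x\<in>X. x \<noteq> 0 \<longrightarrow> \<beta> x x < 0) \<and> (\<forall>y\<in>Y. y \<noteq> 0 \<longrightarrow> \<beta> y y > 0) \<and>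
     (\<forall>x\<in>X. \<forall>y\<in>Y. \<beta> x y = 0) \<and> dim X + dim Y = dim A"
proof -
  have A0: "0 \<in> A" using sA subspace_0 by auto
  obtain X where sX: "subspace X" and XA: "X \<subseteq> A" and negX: "\<forall>x\<in>X. x \<noteq> 0 \<longrightarrow> - \<beta> x x > 0"
    and dX: "dim X = pos_index (\<lambda>x. - \<beta> x x) A"
    using pos_index_attained[OF A0, of "\<lambda>x. - \<beta> x x"] by blast
  have maxX: "dim U \<le> dim X" if "subspace U" "U \<subseteq> A" "\<forall>x\<in>U. x \<noteq> 0 \<longrightarrow> - \<beta> x x > 0" for U
    using pos_index_ge[OF that] dX by simp
  define Y where "Y = {y \<in> A. \<forall>x\<in>X. \<beta> x y = 0}"
  have YA: "Y \<subseteq> A" by (auto simp: Y_def)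
  have sY: "subspace Y"
    unfolding subspace_def Y_def
    using sA subspace_0 subspace_add subspace_scale linear_0[OF lin2] linear_add[OF lin2] linear_scale[OF lin2]
    by auto
  have orth: "\<forall>x\<in>X. \<forall>y\<in>Y. \<beta> x y = 0" by (auto simp: Y_def)
  define S where "S x = (\<Sum>i\<in>Basis. \<beta> i x *\<^sub>R i)" for x
  have linS: "linear S"
    unfolding S_def
    by (rule linearI) (simp_all add: linear_add[OF lin2] linear_scale[OF lin2] scaleR_add_left
        sum.distrib scaleR_sum_right)
  have innS: "y \<bullet> S x = \<beta> y x" for x y
  proof -
    have "y \<bullet> S x = (\<Sum>i\<in>Basis. \<beta> i x * (y \<bullet> i))" by (simp add: S_def inner_sum_right)
    also have "\<dots> = \<beta> (\<Sum>i\<in>Basis. (y \<bullet> i) *\<^sub>R i) x"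
      by (simp add: linear_sum[OF lin1] linear_scale[OF lin1] mult.commute)
    also have "\<dots> = \<beta> y x" by (simp add: euclidean_representation)
    finally show ?thesis .
  qed
  define Oc where "Oc = {y. \<forall>z\<in>S ` X. orthogonal z y}"
  have sO: "subspace Oc" unfolding Oc_def by (rule subspace_orthogonal_to_vectors)
  have dO: "dim Oc + dim (S ` X) = DIM('a)"
    using dim_subspace_orthogonal_to_vectors[of "S ` X" UNIV] linear_subspace_image[OF linS sX]
    by (simp add: Oc_def dim_UNIV)
  have YAO: "Y = A \<inter> Oc"
  proof
    show "Y \<subseteq> A \<inter> Oc"
    proof
      fix y assume y: "y \<in> Y"
      then have yA: "y \<in> A" and h: "\<forall>x\<in>X. \<beta> x y = 0" by (auto simp: Y_def)
      have "\<forall>z\<in>S`X. orthogonal z y"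
      proof
        fix z assume "z \<in> S ` X" then obtain x where x: "x\<in>X" "z = S x" by auto
        have "orthogonal z y \<longleftrightarrow> y \<bullet> S x = 0" using x by (simp add: orthogonal_def inner_commute)
        moreover have "y \<bullet> S x = \<beta> y x" by (rule innS)
        moreover have "\<beta> y x = \<beta> x y" using sym yA x XA by auto
        ultimately show "orthogonal z y" using h x by simp
      qed
      then show "y \<in> A \<inter> Oc" using yA by (simp add: Oc_def)
    qed
    show "A \<inter> Oc \<subseteq> Y"
      using XA sym innS by (fastforce simp: Y_def Oc_def orthogonal_def inner_commute)
  qed
  have "dim {x + y |x y. x \<in> A \<and> y \<in> Oc} \<le> DIM('a)"
    by (rule order_trans[OF dim_subset[OF subset_UNIV]]) (simp add: dim_UNIV)
  then have "dim A + dim Oc \<le> DIM('a) + dim Y"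
    using dim_sums_Int[OF sA sO] YAO by simp
  moreover have "dim (S ` X) \<le> dim X" by (rule dim_image_le[OF linS])
  ultimately have dYge: "dim A \<le> dim X + dim Y" using dO by linarith
  have XY0: "X \<inter> Y \<subseteq> {0}"
  proof
    fix z assume "z \<in> X \<inter> Y"
    then have "\<beta> z z = 0" "z \<in> X" using orth by auto
    then show "z \<in> {0}" using negX by force
  qed
  let ?XY = "{x + y |x y. x \<in> X \<and> y \<in> Y}"
  have sXY: "subspace ?XY" using subspace_sums[OF sX sY] by simp
  have XYA: "?XY \<subseteq> A" using XA YA sA subspace_add by blast
  have dXY: "dim ?XY = dim X + dim Y" by (rule dim_Int_zero[OF sX sY XY0])
  have dle: "dim X + dim Y \<le> dim A" using dim_subset[OF XYA] dXY by simp
  have XYeq: "?XY = A" using subspace_dim_equal[OF sXY sA XYA] dXY dYge by simp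
  have psd: "\<beta> y y \<ge> 0" if y: "y \<in> Y" for y
  proof (rule ccontr)
    assume neg: "\<not> \<beta> y y \<ge> 0"
    then have y0: "y \<noteq> 0" using linear_0[OF lin2] by auto
    have ynX: "y \<notin> span X"
    proof
      assume "y \<in> span X"
      then have "y \<in> X" using sX by (metis span_eq_iff)
      then have "y \<in> {0}" using XY0 y by auto
      then show False using y0 by simp
    qed
    let ?U = "span (insert y X)"
    have UA: "?U \<subseteq> A" using XA YA y sA by (meson insert_subset span_minimal subsetD)
    have "\<forall>u\<in>?U. u \<noteq> 0 \<longrightarrow> - \<beta> u u > 0"
    proof (intro ballI impI)
      fix u assume u: "u \<in> ?U" "u \<noteq> 0"
      have spX: "span X = X" using sX by (simp add: span_eq_iff)
      from u obtain k where k: "u - k *\<^sub>R y \<in> X" using span_insert[of y X] spX by auto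
      define x where "x = u - k *\<^sub>R y"
      have ux: "u = x + k *\<^sub>R y" by (simp add: x_def)
      have xX: "x \<in> X" using k x_def by simp
      have bxy: "\<beta> x y = 0" using orth xX y by auto
      have byx: "\<beta> y x = 0" using sym[of x y] bxy xX y XA YA by auto
      have "\<beta> u u = \<beta> x x + k * k * \<beta> y y"
        unfolding ux by (simp add: linear_add[OF lin1] linear_add[OF lin2] linear_scale[OF lin1]
            linear_scale[OF lin2] bxy byx)
      moreover have "\<beta> x x \<le> 0" using negX xX by (cases "x = 0") (auto simp: linear_0[OF lin2])
      moreover have "k * k * \<beta> y y \<le> 0" using neg by (simp add: mult_nonneg_nonpos)
      moreover have "x \<noteq> 0 \<or> k \<noteq> 0" using u(2) ux by auto
      moreover have "x \<noteq> 0 \<Longrightarrow> \<beta> x x < 0" using negX xX by auto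
      moreover have "k * k * \<beta> y y < 0" if "k \<noteq> 0"
      proof -
        have "k * k > 0" using that not_real_square_gt_zero by blast
        then show ?thesis using neg by (simp add: mult_pos_neg)
      qed
      ultimately show "- \<beta> u u > 0" by linarith
    qed
    then have "dim ?U \<le> dim X" using maxX[OF subspace_span UA] by blast
    moreover have "dim ?U = dim X + 1" using dim_insert[of y X] ynX by simp
    ultimately show False by simp
  qed
  have pd: "\<beta> y y > 0" if y: "y \<in> Y" "y \<noteq> 0" for y
  proof (rule ccontr)
    assume "\<not> \<beta> y y > 0"
    then have y0: "\<beta> y y = 0" using psd[OF y(1)] by simp
    have by': "\<beta> y y' = 0" if y': "y' \<in> Y" for y'
    proof -
      have symyy: "\<beta> y' y = \<beta> y y'" using sym y y' YA by auto
      have q: "0 \<le> 2 * t * \<beta> y y' + t * t * \<beta> y' y'" for t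
      proof -
        have "y + t *\<^sub>R y' \<in> Y" using sY y y' subspace_add subspace_scale by blast
        then have "0 \<le> \<beta> (y + t *\<^sub>R y') (y + t *\<^sub>R y')" by (rule psd)
        also have "\<dots> = 2 * t * \<beta> y y' + t * t * \<beta> y' y'"
          by (simp add: linear_add[OF lin1] linear_add[OF lin2] linear_scale[OF lin1]
            linear_scale[OF lin2] y0 symyy algebra_simps)
        finally show ?thesis .
      qed
      show ?thesis
      proof (rule ccontr)
        assume ne: "\<beta> y y' \<noteq> 0"
        define c where "c = \<beta> y' y'"
        have c0: "c \<ge> 0" using psd[OF y'] c_def by simp
        define t where "t = - \<beta> y y' / (c + 1)"
        have h0: "0 \<le> 2 * t * \<beta> y y' + t * t * c" using q[of t] c_def by simp
        have tc: "t * (c + 1) = - \<beta> y y'" using c0 by (simp add: t_def)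
        have "(c + 1)\<^sup>2 * (2 * t * \<beta> y y' + t * t * c) =
            2 * (t * (c + 1)) * \<beta> y y' * (c + 1) + (t * (c + 1)) * (t * (c + 1)) * c"
          by (simp add: algebra_simps power2_eq_square)
        also have "\<dots> = - (\<beta> y y')\<^sup>2 * (c + 2)"
          unfolding tc by (simp add: algebra_simps power2_eq_square)
        finally have "(c + 1)\<^sup>2 * (2 * t * \<beta> y y' + t * t * c) = - (\<beta> y y')\<^sup>2 * (c + 2)" .
        moreover have "- (\<beta> y y')\<^sup>2 * (c + 2) < 0" using ne c0 by (simp add: mult_neg_pos)
        moreover have "(c + 1)\<^sup>2 * (2 * t * \<beta> y y' + t * t * c) \<ge> 0" using h0 by simp
        ultimately show False by linarith
      qed
    qed
    have "\<forall>a\<in>A. \<beta> a y = 0"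
    proof
      fix a assume "a \<in> A"
      then obtain x y' where a: "a = x + y'" "x \<in> X" "y' \<in> Y" using XYeq by blast
      have "\<beta> a y = \<beta> x y + \<beta> y' y" using a by (simp add: linear_add[OF lin1])
      also have "\<beta> x y = 0" using orth a y by auto
      also have "\<beta> y' y = \<beta> y y'" using sym a y YA by auto
      also have "\<dots> = 0" using by' a by auto
      finally show "\<beta> a y = 0" by simp
    qed
    then have "y = 0" using nd y YA by auto
    then show False using y by simp
  qed
  show ?thesis
    using sX sY XA YA negX pd orth dle dYge
    by (intro exI[of _ X] exI[of _ Y]) auto
qed


definition proj :: "'a::real_vector set \<Rightarrow> 'a set \<Rightarrow> 'a \<Rightarrow> 'a" where
  "proj A B z = (SOME a. a \<in> A \<and> z - a \<in> B)"

definition compl :: "'a::real_vector set \<Rightarrow> 'a set \<Rightarrow> bool" where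
  "compl A B \<longleftrightarrow> subspace A \<and> subspace B \<and> A \<inter> B \<subseteq> {0} \<and> (\<forall>z. \<exists>a\<in>A. \<exists>b\<in>B. z = a + b)"

lemma proj_props:
  assumes "compl A B"
  shows "proj A B z \<in> A" "z - proj A B z \<in> B"
proof -
  from assms obtain a b where "a \<in> A" "b \<in> B" "z = a + b" unfolding compl_def by blast
  then have "\<exists>a. a \<in> A \<and> z - a \<in> B" by auto
  then have "proj A B z \<in> A \<and> z - proj A B z \<in> B" unfolding proj_def by (rule someI_ex)
  then show "proj A B z \<in> A" "z - proj A B z \<in> B" by auto
qed

lemma proj_unique:
  assumes c: "compl A B" and a: "a \<in> A" "z - a \<in> B"
  shows "proj A B z = a"
proof -
  have sA: "subspace A" and sB: "subspace B" and i: "A \<inter> B \<subseteq> {0}" using c by (auto simp: compl_def)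
  have "proj A B z - a \<in> A" using proj_props(1)[OF c] a sA subspace_diff by blast
  moreover have "proj A B z - a = (z - a) - (z - proj A B z)" by simp
  then have "proj A B z - a \<in> B" using proj_props(2)[OF c] a sB subspace_diff by metis
  ultimately show ?thesis using i by auto
qed

lemma linear_proj:
  assumes c: "compl A B"
  shows "linear (proj A B)"
proof -
  have sA: "subspace A" and sB: "subspace B" using c by (auto simp: compl_def)
  show ?thesis
  proof (rule linearI)
    fix x y
    show "proj A B (x + y) = proj A B x + proj A B y"
    proof (rule proj_unique[OF c])
      show "proj A B x + proj A B y \<in> A" using proj_props[OF c] sA subspace_add by blast
      have "x + y - (proj A B x + proj A B y) = (x - proj A B x) + (y - proj A B y)" by simp
      then show "x + y - (proj A B x + proj A B y) \<in> B" using proj_props[OF c] sB subspace_add by metis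
    qed
  next
    fix r x
    show "proj A B (r *\<^sub>R x) = r *\<^sub>R proj A B x"
    proof (rule proj_unique[OF c])
      show "r *\<^sub>R proj A B x \<in> A" using proj_props[OF c] sA subspace_scale by blast
      have "r *\<^sub>R x - r *\<^sub>R proj A B x = r *\<^sub>R (x - proj A B x)" by (simp add: scaleR_diff_right)
      then show "r *\<^sub>R x - r *\<^sub>R proj A B x \<in> B" using proj_props[OF c] sB subspace_scale by metis
    qed
  qed
qed

lemma lag_compl:
  fixes A B :: "'n::finite sympl set"
  assumes "A \<in> lagrangians" "B \<in> lagrangians" "A \<inter> B = {0}"
  shows "compl A B"
  using assms transverse_sum lag_subspace unfolding compl_def by blast

section \<open>Maslov index of a transverse triple\<close>

lemma dim_pd_nd_le:
  fixes Q :: "'a::euclidean_space \<Rightarrow> real"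
  assumes "subspace U" "subspace V" "subspace W" "U \<subseteq> W" "V \<subseteq> W"
    "\<forall>x\<in>U. x \<noteq> 0 \<longrightarrow> Q x > 0" "\<forall>x\<in>V. x \<noteq> 0 \<longrightarrow> Q x < 0"
  shows "dim U + dim V \<le> dim W"
proof (rule dim_Int_zero_le[OF assms(1,2) _ assms(4,5,3)])
  show "U \<inter> V \<subseteq> {0}"
  proof
    fix x assume "x \<in> U \<inter> V"
    then show "x \<in> {0}" using assms(6,7) by force
  qed
qed

lemma maslov_formula:
  fixes A B C :: "'n::finite sympl set" and T :: "'n sympl \<Rightarrow> 'n sympl"
  assumes lA: "A \<in> lagrangians" and lB: "B \<in> lagrangians" and lC: "C \<in> lagrangians"
    and AB: "A \<inter> B = {0}" and AC: "A \<inter> C = {0}"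
    and linT: "linear T" and TB: "\<And>x. T x \<in> B" and TC: "\<And>x. x + T x \<in> C"
    and sX: "subspace X" and sY: "subspace Y" and XA: "X \<subseteq> A" and YA: "Y \<subseteq> A"
    and negX: "\<forall>x\<in>X. x \<noteq> 0 \<longrightarrow> omega x (T x) < 0"
    and posY: "\<forall>y\<in>Y. y \<noteq> 0 \<longrightarrow> omega y (T y) > 0"
    and orth: "\<forall>x\<in>X. \<forall>y\<in>Y. omega x (T y) = 0"
    and dXY: "dim X + dim Y = CARD('n)"
  shows "maslov A B C = int (dim X) - int (dim Y)"
proof -
  define Q where "Q = (\<lambda>(x1::'n sympl, x2::'n sympl, x3::'n sympl). omega x1 x2 + omega x2 x3 + omega x3 x1)"
  define W where "W = A \<times> B \<times> C"
  have mas: "maslov A B C = int (pos_index Q W) - int (pos_index (\<lambda>x. - Q x) W)"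
    by (simp add: maslov_def quad_signature_def Q_def W_def)
  have sA: "subspace A" and sB: "subspace B" and sC: "subspace C"
    using lA lB lC lag_subspace by auto
  have sW: "subspace W" unfolding W_def by (intro subspace_Times sA sB sC)
  have dW: "dim W = 3 * CARD('n)"
    unfolding W_def using dim_Times[OF sA subspace_Times[OF sB sC]] dim_Times[OF sB sC]
      lag_dim[OF lA] lag_dim[OF lB] lag_dim[OF lC] by simp
  have W0: "0 \<in> W" using sW subspace_0 by blast
  have symb: "omega u (T v) = omega v (T u)" if "u \<in> A" "v \<in> A" for u v
  proof -
    have "omega (u + T u) (v + T v) = 0" using lag_iso[OF lC TC TC] .
    moreover have "omega u v = 0" using lag_iso[OF lA that] .
    moreover have "omega (T u) (T v) = 0" using lag_iso[OF lB TB TB] .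
    moreover have "omega (T u) v = - omega v (T u)" by (rule omega_antisym)
    ultimately show ?thesis by simp
  qed
  have isoA: "omega u v = 0" if "u \<in> A" "v \<in> A" for u v using lag_iso[OF lA that] .
  have isoB: "omega (T u) (T v) = 0" for u v using lag_iso[OF lB TB TB] .
  define \<Psi> where "\<Psi> u v w = (u, T v, w + T w)" for u v w :: "'n sympl"
  have Q\<Psi>: "Q (\<Psi> u v w) = omega u (T v) - omega w (T v) - omega u (T w)"
    if "u \<in> A" "w \<in> A" for u v w
  proof -
    have "Q (\<Psi> u v w) = omega u (T v) + omega (T v) w + omega (T v) (T w) + omega w u + omega (T w) u"
      by (simp add: Q_def \<Psi>_def)
    also have "\<dots> = omega u (T v) - omega w (T v) - omega u (T w)"
      using isoB[of v w] isoA[OF that(2,1)] omega_antisym[of "T v" w] omega_antisym[of "T w" u] by simp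
    finally show ?thesis .
  qed
  have linTs: "T (a + b) = T a + T b" "T (a - b) = T a - T b" "T (- a) = - T a" "T (c *\<^sub>R a) = c *\<^sub>R T a"
    "T 0 = 0" for a b c
    using linear_add[OF linT] linear_diff[OF linT] linear_neg[OF linT] linear_scale[OF linT] linear_0[OF linT]
    by auto
  define f where "f p = \<Psi> (fst p + fst (snd p) + snd (snd p)) (fst p - fst (snd p) + snd (snd p)) (snd (snd p))"
    for p :: "'n sympl \<times> 'n sympl \<times> 'n sympl"
  define g where "g p = \<Psi> (fst p + fst (snd p) + snd (snd p)) (snd (snd p) - fst p + fst (snd p)) (fst (snd p))"
    for p :: "'n sympl \<times> 'n sympl \<times> 'n sympl"
  have linf: "linear f"
    by (rule linearI) (simp_all add: f_def \<Psi>_def linTs prod_eq_iff algebra_simps scaleR_add_right scaleR_diff_right)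
  have ling: "linear g"
    by (rule linearI) (simp_all add: g_def \<Psi>_def linTs prod_eq_iff algebra_simps scaleR_add_right scaleR_diff_right)
  have inA: "a + b + c \<in> A" "a - b + c \<in> A" "c - a + b \<in> A" if "a \<in> A" "b \<in> A" "c \<in> A" for a b c
    using that sA by (auto intro: subspace_add subspace_diff)
  have Qf: "Q (f (x, y1, y2)) = omega x (T x) - omega y1 (T y1) - omega y2 (T y2)"
    if "x \<in> X" "y1 \<in> Y" "y2 \<in> Y" for x y1 y2
  proof -
    have xA: "x \<in> A" and yA: "y1 \<in> A" "y2 \<in> A" using that XA YA by auto
    have o1: "omega x (T y1) = 0" using orth that by auto
    have o2: "omega y1 (T x) = 0" using o1 symb[OF xA yA(1)] by simp
    have o3: "omega y2 (T y1) = omega y1 (T y2)" using symb[OF yA(2) yA(1)] .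
    have o4: "omega y2 (T x) = omega x (T y2)" using symb[OF yA(2) xA] .
    show ?thesis
      unfolding f_def using Q\<Psi>[OF inA(1)[OF xA yA] yA(2), of "x - y1 + y2"]
      by (simp add: linTs o1 o2 o3 o4)
  qed
  have Qg: "Q (g (x1, x2, y)) = omega y (T y) - omega x1 (T x1) - omega x2 (T x2)"
    if "x1 \<in> X" "x2 \<in> X" "y \<in> Y" for x1 x2 y
  proof -
    have xA: "x1 \<in> A" "x2 \<in> A" and yA: "y \<in> A" using that XA YA by auto
    have o1: "omega x1 (T y) = 0" using orth that by auto
    have o2: "omega y (T x1) = 0" using o1 symb[OF xA(1) yA] by simp
    have o3: "omega x2 (T x1) = omega x1 (T x2)" using symb[OF xA(2) xA(1)] .
    have o4: "omega x2 (T y) = omega y (T x2)" using symb[OF xA(2) yA] .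
    have "x1 + x2 + y \<in> A" using inA(1)[OF xA yA] .
    show ?thesis
      unfolding g_def using Q\<Psi>[OF \<open>x1 + x2 + y \<in> A\<close> xA(2), of "y - x1 + x2"]
      by (simp add: linTs o1 o2 o3 o4)
  qed
  have ker: "u = 0 \<and> v = 0 \<and> w = 0" if "u \<in> A" "v \<in> A" "w \<in> A" "\<Psi> u v w = 0" for u v w
  proof -
    have u0: "u = 0" and Tv: "T v = 0" and ww: "w + T w = 0" using that(4) by (auto simp: \<Psi>_def zero_prod_def)
    have "v \<in> C" using TC[of v] Tv by simp
    then have v0: "v = 0" using AC that(2) by auto
    have "w = - T w" using ww by (simp add: eq_neg_iff_add_eq_0)
    then have "w \<in> B" using TB[of w] sB subspace_neg by metis
    then have w0: "w = 0" using AB that(3) by auto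
    show ?thesis using u0 v0 w0 by simp
  qed
  let ?Un = "f ` (X \<times> Y \<times> Y)"
  let ?Up = "g ` (X \<times> X \<times> Y)"
  have sXYY: "subspace (X \<times> Y \<times> Y)" by (intro subspace_Times sX sY)
  have sXXY: "subspace (X \<times> X \<times> Y)" by (intro subspace_Times sX sY)
  have injf: "inj_on f (span (X \<times> Y \<times> Y))"
  proof -
    have "\<forall>p\<in>X \<times> Y \<times> Y. f p = 0 \<longrightarrow> p = 0"
    proof (intro ballI impI)
      fix p assume pin: "p \<in> X \<times> Y \<times> Y" and fp: "f p = 0"
      obtain x y1 y2 where pe: "p = (x, y1, y2)" by (cases p) auto
      have p: "x \<in> X" "y1 \<in> Y" "y2 \<in> Y" using pin pe by auto
      then have A3: "x \<in> A" "y1 \<in> A" "y2 \<in> A" using XA YA by auto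
      from ker[OF inA(1)[OF A3] inA(2)[OF A3] A3(3)] fp pe
      have "x + y1 + y2 = 0" "x - y1 + y2 = 0" "y2 = 0" by (auto simp: f_def)
      then have e: "x + y1 = 0" "x - y1 = 0" "y2 = 0" by auto
      have "2 *\<^sub>R x = (x + y1) + (x - y1)" by (simp add: scaleR_2)
      then have x0: "x = 0" using e by simp
      then show "p = 0" using e pe by (simp add: zero_prod_def)
    qed
    then show ?thesis
      unfolding span_eq_iff[THEN iffD2, OF sXYY] linear_inj_on_iff_eq_0[OF linf sXYY] .
  qed
  have injg: "inj_on g (span (X \<times> X \<times> Y))"
  proof -
    have "\<forall>p\<in>X \<times> X \<times> Y. g p = 0 \<longrightarrow> p = 0"
    proof (intro ballI impI)
      fix p assume pin: "p \<in> X \<times> X \<times> Y" and gp: "g p = 0"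
      obtain x1 x2 y where pe: "p = (x1, x2, y)" by (cases p) auto
      have p: "x1 \<in> X" "x2 \<in> X" "y \<in> Y" using pin pe by auto
      then have A3: "x1 \<in> A" "x2 \<in> A" "y \<in> A" using XA YA by auto
      have a1: "x1 + x2 + y \<in> A" using inA(1)[OF A3] .
      have a2: "y - x1 + x2 \<in> A" using inA(3)[OF A3] .
      from ker[OF a1 a2 A3(2)] gp pe
      have "x1 + x2 + y = 0" "y - x1 + x2 = 0" "x2 = 0" by (auto simp: g_def)
      then have e: "x1 + y = 0" "y - x1 = 0" "x2 = 0" by auto
      have "2 *\<^sub>R y = (x1 + y) + (y - x1)" by (simp add: scaleR_2)
      then have "y = 0" using e by simp
      then show "p = 0" using e pe by (simp add: zero_prod_def)
    qed
    then show ?thesis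
      unfolding span_eq_iff[THEN iffD2, OF sXXY] linear_inj_on_iff_eq_0[OF ling sXXY] .
  qed
  have dUn: "dim ?Un = dim X + 2 * dim Y"
    using dim_image_eq[OF linf injf] dim_Times[OF sX subspace_Times[OF sY sY]] dim_Times[OF sY sY] by simp
  have dUp: "dim ?Up = 2 * dim X + dim Y"
    using dim_image_eq[OF ling injg] dim_Times[OF sX subspace_Times[OF sX sY]] dim_Times[OF sX sY] by simp
  have sUn: "subspace ?Un" by (rule linear_subspace_image[OF linf sXYY])
  have sUp: "subspace ?Up" by (rule linear_subspace_image[OF ling sXXY])
  have UnW: "?Un \<subseteq> W"
  proof
    fix v assume "v \<in> ?Un"
    then obtain p where p: "p \<in> X \<times> Y \<times> Y" "v = f p" by blast
    obtain x y1 y2 where pe: "p = (x, y1, y2)" by (cases p) auto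
    have "x \<in> A" "y1 \<in> A" "y2 \<in> A" using XA YA p pe by auto
    then have "x + y1 + y2 \<in> A" by (rule inA(1))
    then show "v \<in> W" using TB TC p pe by (simp add: f_def \<Psi>_def W_def)
  qed
  have UpW: "?Up \<subseteq> W"
  proof
    fix v assume "v \<in> ?Up"
    then obtain p where p: "p \<in> X \<times> X \<times> Y" "v = g p" by blast
    obtain x1 x2 y where pe: "p = (x1, x2, y)" by (cases p) auto
    have "x1 \<in> A" "x2 \<in> A" "y \<in> A" using XA YA p pe by auto
    then have "x1 + x2 + y \<in> A" by (rule inA(1))
    then show "v \<in> W" using TB TC p pe by (simp add: g_def \<Psi>_def W_def)
  qed
  have bX: "omega x (T x) \<le> 0" if "x \<in> X" for x using negX that by (cases "x = 0") (auto simp: linTs)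
  have bY: "omega y (T y) \<ge> 0" if "y \<in> Y" for y using posY that by (cases "y = 0") (auto simp: linTs)
  have negUn: "\<forall>v\<in>?Un. v \<noteq> 0 \<longrightarrow> Q v < 0"
  proof (intro ballI impI)
    fix v assume "v \<in> ?Un" and v0: "v \<noteq> 0"
    then obtain p where pp: "p \<in> X \<times> Y \<times> Y" "v = f p" by blast
    obtain x y1 y2 where pe: "p = (x, y1, y2)" by (cases p) auto
    have p: "x \<in> X" "y1 \<in> Y" "y2 \<in> Y" using pp pe by auto
    have "x \<noteq> 0 \<or> y1 \<noteq> 0 \<or> y2 \<noteq> 0"
    proof (rule ccontr)
      assume "\<not> (x \<noteq> 0 \<or> y1 \<noteq> 0 \<or> y2 \<noteq> 0)"
      then have "p = 0" using pe by (simp add: zero_prod_def)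
      then have "v = 0" using pp linear_0[OF linf] by simp
      then show False using v0 by simp
    qed
    moreover have "x \<noteq> 0 \<Longrightarrow> omega x (T x) < 0" using negX p(1) by auto
    moreover have "y1 \<noteq> 0 \<Longrightarrow> omega y1 (T y1) > 0" using posY p(2) by auto
    moreover have "y2 \<noteq> 0 \<Longrightarrow> omega y2 (T y2) > 0" using posY p(3) by auto
    ultimately have "Q (f (x, y1, y2)) < 0"
      unfolding Qf[OF p(1-3)] using bX[OF p(1)] bY[OF p(2)] bY[OF p(3)] by (elim disjE) linarith+
    then show "Q v < 0" using pp pe by simp
  qed
  have posUp: "\<forall>v\<in>?Up. v \<noteq> 0 \<longrightarrow> Q v > 0"
  proof (intro ballI impI)
    fix v assume "v \<in> ?Up" and v0: "v \<noteq> 0"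
    then obtain p where pp: "p \<in> X \<times> X \<times> Y" "v = g p" by blast
    obtain x1 x2 y where pe: "p = (x1, x2, y)" by (cases p) auto
    have p: "x1 \<in> X" "x2 \<in> X" "y \<in> Y" using pp pe by auto
    have "x1 \<noteq> 0 \<or> x2 \<noteq> 0 \<or> y \<noteq> 0"
    proof (rule ccontr)
      assume "\<not> (x1 \<noteq> 0 \<or> x2 \<noteq> 0 \<or> y \<noteq> 0)"
      then have "p = 0" using pe by (simp add: zero_prod_def)
      then have "v = 0" using pp linear_0[OF ling] by simp
      then show False using v0 by simp
    qed
    moreover have "x1 \<noteq> 0 \<Longrightarrow> omega x1 (T x1) < 0" using negX p(1) by auto
    moreover have "x2 \<noteq> 0 \<Longrightarrow> omega x2 (T x2) < 0" using negX p(2) by auto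
    moreover have "y \<noteq> 0 \<Longrightarrow> omega y (T y) > 0" using posY p(3) by auto
    ultimately have "Q (g (x1, x2, y)) > 0"
      unfolding Qg[OF p(1-3)] using bX[OF p(1)] bX[OF p(2)] bY[OF p(3)] by (elim disjE) linarith+
    then show "Q v > 0" using pp pe by simp
  qed
  have p1: "pos_index Q W = 2 * dim X + dim Y"
  proof (rule antisym)
    show "pos_index Q W \<le> 2 * dim X + dim Y"
    proof (rule pos_index_le[OF W0])
      fix U assume "subspace U" "U \<subseteq> W" "\<forall>x\<in>U. x \<noteq> 0 \<longrightarrow> Q x > 0"
      from dim_pd_nd_le[OF this(1) sUn sW this(2) UnW this(3) negUn]
      show "dim U \<le> 2 * dim X + dim Y" using dUn dW dXY by simp
    qed
    show "2 * dim X + dim Y \<le> pos_index Q W"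
      using pos_index_ge[OF sUp UpW posUp] dUp by simp
  qed
  have p2: "pos_index (\<lambda>x. - Q x) W = dim X + 2 * dim Y"
  proof (rule antisym)
    show "pos_index (\<lambda>x. - Q x) W \<le> dim X + 2 * dim Y"
    proof (rule pos_index_le[OF W0])
      fix U assume U: "subspace U" "U \<subseteq> W" "\<forall>x\<in>U. x \<noteq> 0 \<longrightarrow> - Q x > 0"
      have nU: "\<forall>x\<in>?Up. x \<noteq> 0 \<longrightarrow> - Q x < 0" using posUp by auto
      have "dim U + dim ?Up \<le> dim W" by (rule dim_pd_nd_le[OF U(1) sUp sW U(2) UpW U(3) nU])
      then show "dim U \<le> dim X + 2 * dim Y" using dUp dW dXY by simp
    qed
    have "\<forall>x\<in>?Un. x \<noteq> 0 \<longrightarrow> - Q x > 0" using negUn by auto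
    then show "dim X + 2 * dim Y \<le> pos_index (\<lambda>x. - Q x) W"
      using pos_index_ge[OF sUn UnW] dUn by simp
  qed
  show ?thesis unfolding mas p1 p2 by simp
qed


lemma maslov_transverse:
  fixes A B C :: "'n::finite sympl set"
  assumes lA: "A \<in> lagrangians" and lB: "B \<in> lagrangians" and lC: "C \<in> lagrangians"
    and AB: "A \<inter> B = {0}" and BC: "B \<inter> C = {0}" and AC: "A \<inter> C = {0}"
  shows "(\<forall>x\<in>A. \<forall>y\<in>B. x + y \<in> C \<longrightarrow> x \<noteq> 0 \<longrightarrow> omega x y < 0) \<longleftrightarrow> maslov A B C = int CARD('n)"
    and "maslov A B C = - int CARD('n) \<Longrightarrow> (\<forall>x\<in>A. \<forall>y\<in>B. x + y \<in> C \<longrightarrow> x \<noteq> 0 \<longrightarrow> omega x y > 0)"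
proof -
  have c: "compl B C" by (rule lag_compl[OF lB lC BC])
  have sA: "subspace A" and sB: "subspace B" and sC: "subspace C" using lA lB lC lag_subspace by auto
  define T where "T x = - proj B C x" for x
  have linT: "linear T" unfolding T_def by (rule linear_compose_neg[OF linear_proj[OF c]])
  have TB: "T x \<in> B" for x unfolding T_def using proj_props(1)[OF c] sB subspace_neg by blast
  have TC: "x + T x \<in> C" for x unfolding T_def using proj_props(2)[OF c] by simp
  have Tuniq: "y = T x" if "y \<in> B" "x + y \<in> C" for x y
  proof -
    have "proj B C x = - y" by (rule proj_unique[OF c]) (use that sB subspace_neg in auto)
    then show ?thesis by (simp add: T_def)
  qed
  have T0: "T 0 = 0" by (rule linear_0[OF linT])
  have symb: "omega u (T v) = omega v (T u)" if "u \<in> A" "v \<in> A" for u v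
  proof -
    have "omega (u + T u) (v + T v) = 0" using lag_iso[OF lC TC TC] .
    moreover have "omega u v = 0" using lag_iso[OF lA that] .
    moreover have "omega (T u) (T v) = 0" using lag_iso[OF lB TB TB] .
    moreover have "omega (T u) v = - omega v (T u)" by (rule omega_antisym)
    ultimately show ?thesis by (simp add: linear_add[OF linT])
  qed
  have TA: "T ` A = B"
  proof -
    have inj: "inj_on T A"
      unfolding linear_inj_on_iff_eq_0[OF linT sA]
    proof (intro ballI impI)
      fix x assume x: "x \<in> A" "T x = 0"
      then have "x \<in> C" using TC[of x] by simp
      then show "x = 0" using x AC by auto
    qed
    have "dim (T ` A) = dim A"
      using dim_image_eq[OF linT] inj span_eq_iff[THEN iffD2, OF sA] by metis
    moreover have "T ` A \<subseteq> B" using TB by auto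
    moreover have "subspace (T ` A)" by (rule linear_subspace_image[OF linT sA])
    ultimately show ?thesis using subspace_dim_equal[OF _ sB] lag_dim[OF lA] lag_dim[OF lB] by simp
  qed
  define \<beta> where "\<beta> x y = omega x (T y)" for x y
  have lin1: "linear (\<lambda>x. \<beta> x y)" for y by (rule linearI) (simp_all add: \<beta>_def)
  have lin2: "linear (\<beta> x)" for x
    by (rule linearI) (simp_all add: \<beta>_def linear_add[OF linT] linear_scale[OF linT])
  have nd: "y = 0" if y: "y \<in> A" "\<forall>x\<in>A. \<beta> x y = 0" for y
  proof -
    have "\<forall>b\<in>B. omega y b = 0"
    proof
      fix b assume "b \<in> B"
      then obtain x where x: "x \<in> A" "b = T x" using TA by auto
      then show "omega y b = 0" using y symb[of x y] by (simp add: \<beta>_def)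
    qed
    then have "y \<in> B" using lag_maximal'[OF lB] by blast
    then show ?thesis using y AB by auto
  qed
  have symbeta: "\<beta> x y = \<beta> y x" if "x \<in> A" "y \<in> A" for x y using symb[OF that] by (simp add: \<beta>_def)
  obtain X Y where sX: "subspace X" and sY: "subspace Y" and XA: "X \<subseteq> A" and YA: "Y \<subseteq> A"
    and negX: "\<forall>x\<in>X. x \<noteq> 0 \<longrightarrow> \<beta> x x < 0" and posY: "\<forall>y\<in>Y. y \<noteq> 0 \<longrightarrow> \<beta> y y > 0"
    and orth: "\<forall>x\<in>X. \<forall>y\<in>Y. \<beta> x y = 0" and dXY: "dim X + dim Y = dim A"
    using sylvester[OF sA lin1 lin2 symbeta nd] by blast
  have dA: "dim A = CARD('n)" by (rule lag_dim[OF lA])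
  have mf: "maslov A B C = int (dim X) - int (dim Y)"
    by (rule maslov_formula[OF lA lB lC AB AC linT TB TC sX sY XA YA])
      (use negX posY orth dXY dA in \<open>auto simp: \<beta>_def\<close>)
  show "(\<forall>x\<in>A. \<forall>y\<in>B. x + y \<in> C \<longrightarrow> x \<noteq> 0 \<longrightarrow> omega x y < 0) \<longleftrightarrow> maslov A B C = int CARD('n)"
  proof
    assume h: "\<forall>x\<in>A. \<forall>y\<in>B. x + y \<in> C \<longrightarrow> x \<noteq> 0 \<longrightarrow> omega x y < 0"
    have "maslov A B C = int (dim A) - int (dim {0::'n sympl})"
      by (rule maslov_formula[OF lA lB lC AB AC linT TB TC sA subspace_single_0 order_refl])
        (use h TB TC T0 dA dim_zero_set subspace_0[OF sA] in auto)
    then show "maslov A B C = int CARD('n)" using dA dim_zero_set by simp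
  next
    assume m: "maslov A B C = int CARD('n)"
    then have "dim Y = 0" "dim X = CARD('n)" using mf dXY dA by linarith+
    then have XeqA: "X = A" using subspace_dim_equal[OF sX sA XA] dA by simp
    show "\<forall>x\<in>A. \<forall>y\<in>B. x + y \<in> C \<longrightarrow> x \<noteq> 0 \<longrightarrow> omega x y < 0"
    proof (intro ballI impI)
      fix x y assume xy: "x \<in> A" "y \<in> B" "x + y \<in> C" "x \<noteq> 0"
      have "y = T x" by (rule Tuniq[OF xy(2,3)])
      moreover have "\<beta> x x < 0" using negX XeqA xy(1,4) by blast
      ultimately show "omega x y < 0" by (simp add: \<beta>_def)
    qed
  qed
  assume m: "maslov A B C = - int CARD('n)"
  then have "dim X = 0" "dim Y = CARD('n)" using mf dXY dA by linarith+
  then have YeqA: "Y = A" using subspace_dim_equal[OF sY sA YA] dA by simp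
  show "\<forall>x\<in>A. \<forall>y\<in>B. x + y \<in> C \<longrightarrow> x \<noteq> 0 \<longrightarrow> omega x y > 0"
  proof (intro ballI impI)
    fix x y assume xy: "x \<in> A" "y \<in> B" "x + y \<in> C" "x \<noteq> 0"
    have "y = T x" by (rule Tuniq[OF xy(2,3)])
    moreover have "\<beta> x x > 0" using posY YeqA xy(1,4) by blast
    ultimately show "omega x y > 0" by (simp add: \<beta>_def)
  qed
qed


lemma pos_index_iso:
  fixes f :: "'a::euclidean_space \<Rightarrow> 'b::euclidean_space" and g :: "'b \<Rightarrow> 'a" and Q :: "'b \<Rightarrow> real"
  assumes lf: "linear f" and lg: "linear g" and gf: "\<And>x. g (f x) = x" and fg: "\<And>y. f (g y) = y"
  shows "pos_index (\<lambda>x. Q (f x)) W = pos_index Q (f ` W)"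
proof -
  have injf: "inj_on f S" for S
  proof (rule inj_onI)
    fix x y assume "f x = f y"
    then have "g (f x) = g (f y)" by simp
    then show "x = y" by (simp only: gf)
  qed
  have injg: "inj_on g S" for S
  proof (rule inj_onI)
    fix x y assume "g x = g y"
    then have "f (g x) = f (g y)" by simp
    then show "x = y" by (simp only: fg)
  qed
  have f0: "f 0 = 0" by (rule linear_0[OF lf])
  have g0: "g 0 = 0" by (rule linear_0[OF lg])
  have "{dim U | U. subspace U \<and> U \<subseteq> W \<and> (\<forall>x\<in>U. x \<noteq> 0 \<longrightarrow> Q (f x) > 0)} =
        {dim U | U. subspace U \<and> U \<subseteq> f ` W \<and> (\<forall>x\<in>U. x \<noteq> 0 \<longrightarrow> Q x > 0)}"
  proof (intro set_eqI iffI)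
    fix d assume "d \<in> {dim U | U. subspace U \<and> U \<subseteq> W \<and> (\<forall>x\<in>U. x \<noteq> 0 \<longrightarrow> Q (f x) > 0)}"
    then obtain U where U: "d = dim U" "subspace U" "U \<subseteq> W" "\<forall>x\<in>U. x \<noteq> 0 \<longrightarrow> Q (f x) > 0" by blast
    have "dim (f ` U) = dim U" by (rule dim_image_eq[OF lf injf])
    moreover have "subspace (f ` U)" by (rule linear_subspace_image[OF lf U(2)])
    moreover have "f ` U \<subseteq> f ` W" using U(3) by (rule image_mono)
    moreover have "\<forall>y\<in>f ` U. y \<noteq> 0 \<longrightarrow> Q y > 0"
    proof (intro ballI impI)
      fix y assume "y \<in> f ` U" "y \<noteq> 0"
      then obtain x where x: "x \<in> U" "y = f x" by blast
      then have "x \<noteq> 0" using \<open>y \<noteq> 0\<close> f0 by blast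
      then show "Q y > 0" using U(4) x by blast
    qed
    ultimately have "d = dim (f ` U) \<and> subspace (f ` U) \<and> f ` U \<subseteq> f ` W \<and> (\<forall>x\<in>f ` U. x \<noteq> 0 \<longrightarrow> Q x > 0)"
      using U(1) by simp
    then show "d \<in> {dim U | U. subspace U \<and> U \<subseteq> f ` W \<and> (\<forall>x\<in>U. x \<noteq> 0 \<longrightarrow> Q x > 0)}"
      by (intro CollectI exI[of _ "f ` U"])
  next
    fix d assume "d \<in> {dim U | U. subspace U \<and> U \<subseteq> f ` W \<and> (\<forall>x\<in>U. x \<noteq> 0 \<longrightarrow> Q x > 0)}"
    then obtain U where U: "d = dim U" "subspace U" "U \<subseteq> f ` W" "\<forall>x\<in>U. x \<noteq> 0 \<longrightarrow> Q x > 0" by blast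
    have "dim (g ` U) = dim U" by (rule dim_image_eq[OF lg injg])
    moreover have "subspace (g ` U)" by (rule linear_subspace_image[OF lg U(2)])
    moreover have "g ` U \<subseteq> W"
    proof
      fix x assume "x \<in> g ` U"
      then obtain u where u: "u \<in> U" "x = g u" by blast
      then obtain w where w: "w \<in> W" "u = f w" using U(3) by blast
      have "x = w" using u w by (simp only: gf)
      then show "x \<in> W" using w by simp
    qed
    moreover have "\<forall>x\<in>g ` U. x \<noteq> 0 \<longrightarrow> Q (f x) > 0"
    proof (intro ballI impI)
      fix x assume "x \<in> g ` U" "x \<noteq> 0"
      then obtain u where u: "u \<in> U" "x = g u" by blast
      then have "u \<noteq> 0" using \<open>x \<noteq> 0\<close> g0 by blast
      moreover have "f x = u" using u by (simp only: fg)
      ultimately show "Q (f x) > 0" using U(4) u by simp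
    qed
    ultimately have "d = dim (g ` U) \<and> subspace (g ` U) \<and> g ` U \<subseteq> W \<and> (\<forall>x\<in>g ` U. x \<noteq> 0 \<longrightarrow> Q (f x) > 0)"
      using U(1) by simp
    then show "d \<in> {dim U | U. subspace U \<and> U \<subseteq> W \<and> (\<forall>x\<in>U. x \<noteq> 0 \<longrightarrow> Q (f x) > 0)}"
      by (intro CollectI exI[of _ "g ` U"])
  qed
  then show ?thesis unfolding pos_index_def by simp
qed

lemma maslov_antisym:
  fixes L1 L2 L3 :: "'n::finite sympl set"
  shows "maslov L3 L2 L1 = - maslov L1 L2 L3"
proof -
  define Q where "Q = (\<lambda>(x1::'n sympl, x2::'n sympl, x3::'n sympl). omega x1 x2 + omega x2 x3 + omega x3 x1)"
  define r where "r = (\<lambda>p::'n sympl \<times> 'n sympl \<times> 'n sympl. (snd (snd p), fst (snd p), fst p))"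
  have lr: "linear r" unfolding r_def by (rule linearI) (simp_all add: prod_eq_iff)
  have rr: "r (r p) = p" for p by (simp add: r_def)
  have img: "r ` (L3 \<times> L2 \<times> L1) = L1 \<times> L2 \<times> L3"
  proof
    show "r ` (L3 \<times> L2 \<times> L1) \<subseteq> L1 \<times> L2 \<times> L3"
    proof
      fix q assume "q \<in> r ` (L3 \<times> L2 \<times> L1)"
      then obtain p where p: "p \<in> L3 \<times> L2 \<times> L1" "q = r p" by blast
      then show "q \<in> L1 \<times> L2 \<times> L3" unfolding r_def by (simp add: mem_Times_iff)
    qed
    show "L1 \<times> L2 \<times> L3 \<subseteq> r ` (L3 \<times> L2 \<times> L1)"
    proof
      fix p assume "p \<in> L1 \<times> L2 \<times> L3"
      then have "r p \<in> L3 \<times> L2 \<times> L1" unfolding r_def by (simp add: mem_Times_iff)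
      then show "p \<in> r ` (L3 \<times> L2 \<times> L1)" by (rule image_eqI[where x="r p", rotated]) (simp add: rr)
    qed
  qed
  have Qr: "Q p = - Q (r p)" for p
  proof -
    obtain a b c where p: "p = (a, b, c)" by (cases p) auto
    have "Q p = omega a b + omega b c + omega c a" by (simp add: Q_def p)
    moreover have "Q (r p) = omega c b + omega b a + omega a c" by (simp add: Q_def r_def p)
    moreover have "omega c b = - omega b c" "omega b a = - omega a b" "omega a c = - omega c a"
      by (rule omega_antisym)+
    ultimately show ?thesis by simp
  qed
  have m321: "maslov L3 L2 L1 = int (pos_index Q (L3 \<times> L2 \<times> L1)) - int (pos_index (\<lambda>x. - Q x) (L3 \<times> L2 \<times> L1))"
    by (simp add: maslov_def quad_signature_def Q_def)
  have m123: "maslov L1 L2 L3 = int (pos_index Q (L1 \<times> L2 \<times> L3)) - int (pos_index (\<lambda>x. - Q x) (L1 \<times> L2 \<times> L3))"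
    by (simp add: maslov_def quad_signature_def Q_def)
  have fe1: "Q = (\<lambda>x. - Q (r x))" by (rule ext) (rule Qr)
  have fe2: "(\<lambda>x. - Q x) = (\<lambda>x. Q (r x))"
  proof (rule ext)
    fix x show "- Q x = Q (r x)" using Qr[of x] by simp
  qed
  have i1: "pos_index (\<lambda>x. - Q (r x)) (L3 \<times> L2 \<times> L1) = pos_index (\<lambda>x. - Q x) (r ` (L3 \<times> L2 \<times> L1))"
    by (rule pos_index_iso[OF lr lr rr rr])
  have i2: "pos_index (\<lambda>x. Q (r x)) (L3 \<times> L2 \<times> L1) = pos_index Q (r ` (L3 \<times> L2 \<times> L1))"
    by (rule pos_index_iso[OF lr lr rr rr])
  have e1: "pos_index Q (L3 \<times> L2 \<times> L1) = pos_index (\<lambda>x. - Q x) (L1 \<times> L2 \<times> L3)"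
    using arg_cong[OF fe1, where f="\<lambda>F. pos_index F (L3 \<times> L2 \<times> L1)"] i1 img by simp
  have e2: "pos_index (\<lambda>x. - Q x) (L3 \<times> L2 \<times> L1) = pos_index Q (L1 \<times> L2 \<times> L3)"
    using arg_cong[OF fe2, where f="\<lambda>F. pos_index F (L3 \<times> L2 \<times> L1)"] i2 img by simp
  show ?thesis using m321 m123 e1 e2 by linarith
qed

section \<open>The function h attached to a transverse pair\<close>

lemma quad_zero:
  fixes b c :: real
  assumes "\<forall>t. 0 \<le> t * b + t * t * c"
  shows "b = 0"
proof (rule ccontr)
  assume b: "b \<noteq> 0"
  define t where "t = - b / (\<bar>c\<bar> + 1)"
  have tc: "t * (\<bar>c\<bar> + 1) = - b" by (simp add: t_def)
  have "(\<bar>c\<bar> + 1)\<^sup>2 * (t * b + t * t * c) = (t * (\<bar>c\<bar> + 1)) * b * (\<bar>c\<bar> + 1) + (t * (\<bar>c\<bar> + 1)) * (t * (\<bar>c\<bar> + 1)) * c"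
    by (simp add: algebra_simps power2_eq_square)
  also have "\<dots> = - b * b * (\<bar>c\<bar> + 1) + b * b * c" unfolding tc by simp
  also have "\<dots> \<le> - b * b"
  proof -
    have "b * b * c \<le> b * b * \<bar>c\<bar>" by (rule mult_left_mono) auto
    then show ?thesis by (simp add: algebra_simps)
  qed
  also have "\<dots> < 0"
  proof -
    have "b * b > 0" using b not_real_square_gt_zero by blast
    then show ?thesis by simp
  qed
  finally have "(\<bar>c\<bar> + 1)\<^sup>2 * (t * b + t * t * c) < 0" .
  moreover have "(\<bar>c\<bar> + 1)\<^sup>2 * (t * b + t * t * c) \<ge> 0" using assms by simp
  ultimately show False by simp
qed

context
  fixes N C :: "'n::finite sympl set"
  assumes lN: "N \<in> lagrangians" and lC: "C \<in> lagrangians" and NC: "N \<inter> C = {0}"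
begin

definition hN :: "'n sympl \<Rightarrow> real" where "hN y = omega (proj N C y) y"

lemma cNC: "compl N C" by (rule lag_compl[OF lN lC NC])

lemma linP: "linear (proj N C)" by (rule linear_proj[OF cNC])

lemma P_N: "x \<in> N \<Longrightarrow> proj N C x = x"
  by (rule proj_unique[OF cNC]) (use lC subspace_0 lag_subspace in auto)

lemma P_in: "proj N C y \<in> N" and P_rest: "y - proj N C y \<in> C"
  using proj_props[OF cNC] by auto

lemma hN_shift: "x \<in> N \<Longrightarrow> hN (x + y) - hN y = omega x y"
proof -
  assume x: "x \<in> N"
  have "proj N C (x + y) = x + proj N C y" using linear_add[OF linP] P_N[OF x] by simp
  moreover have "omega (proj N C y) x = 0" using lag_iso[OF lN P_in x] .
  ultimately show ?thesis by (simp add: hN_def)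
qed

lemma hN_scale: "hN (c *\<^sub>R y) = c * c * hN y"
  by (simp add: hN_def linear_scale[OF linP])

lemma hN_0: "hN 0 = 0"
  by (simp add: hN_def linear_0[OF linP])

lemma hN_tendsto: "(m \<longlongrightarrow> a) F \<Longrightarrow> ((\<lambda>k. hN (m k)) \<longlongrightarrow> hN a) F"
proof -
  assume m: "(m \<longlongrightarrow> a) F"
  have bl: "bounded_linear (proj N C)" using linP linear_conv_bounded_linear by auto
  have "((\<lambda>k. proj N C (m k)) \<longlongrightarrow> proj N C a) F" by (rule bounded_linear.tendsto[OF bl m])
  then show ?thesis unfolding hN_def by (intro tendsto_omega m)
qed

lemma hN_from_maslov:
  assumes lM: "M \<in> lagrangians" and CM: "C \<inter> M = {0}" and NM: "N \<inter> M = {0}"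
  shows "maslov N C M = int CARD('n) \<Longrightarrow> \<forall>m\<in>M. m \<noteq> 0 \<longrightarrow> hN m < 0"
    and "maslov N C M = - int CARD('n) \<Longrightarrow> \<forall>m\<in>M. m \<noteq> 0 \<longrightarrow> hN m > 0"
proof -
  have key: "proj N C m \<in> N" "m - proj N C m \<in> C" "proj N C m + (m - proj N C m) \<in> M"
    "proj N C m \<noteq> 0" if "m \<in> M" "m \<noteq> 0" for m
  proof -
    show "proj N C m \<in> N" "m - proj N C m \<in> C" by (rule P_in, rule P_rest)
    show "proj N C m + (m - proj N C m) \<in> M" using that by simp
    show "proj N C m \<noteq> 0"
    proof
      assume "proj N C m = 0"
      then have "m \<in> C" using P_rest[of m] by simp
      then show False using that CM by auto
    qed
  qed
  have hv: "hN m = omega (proj N C m) (m - proj N C m)" for m by (simp add: hN_def)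
  {
    assume "maslov N C M = int CARD('n)"
    then have g: "\<forall>x\<in>N. \<forall>y\<in>C. x + y \<in> M \<longrightarrow> x \<noteq> 0 \<longrightarrow> omega x y < 0"
      using maslov_transverse(1)[OF lN lC lM NC CM NM] by blast
    show "\<forall>m\<in>M. m \<noteq> 0 \<longrightarrow> hN m < 0"
    proof (intro ballI impI)
      fix m assume "m \<in> M" "m \<noteq> 0"
      from g key[OF this] show "hN m < 0" unfolding hv by blast
    qed
  }
  {
    assume "maslov N C M = - int CARD('n)"
    then have g: "\<forall>x\<in>N. \<forall>y\<in>C. x + y \<in> M \<longrightarrow> x \<noteq> 0 \<longrightarrow> omega x y > 0"
      using maslov_transverse(2)[OF lN lC lM NC CM NM] by blast
    show "\<forall>m\<in>M. m \<noteq> 0 \<longrightarrow> hN m > 0"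
    proof (intro ballI impI)
      fix m assume "m \<in> M" "m \<noteq> 0"
      from g key[OF this] show "hN m > 0" unfolding hv by blast
    qed
  }
qed

lemma hN_strict:
  assumes lL: "L \<in> lagrangians" and LN: "L \<inter> N = {0}" and LC: "L \<inter> C = {0}"
    and s: "s \<noteq> 0" and semi: "\<forall>a\<in>L. 0 \<le> s * hN a"
  shows "\<forall>a\<in>L. a \<noteq> 0 \<longrightarrow> 0 < s * hN a"
proof (intro ballI impI)
  fix a assume aL: "a \<in> L" and a0: "a \<noteq> 0"
  have sL: "subspace L" using lL lag_subspace by auto
  have sC: "subspace C" using lC lag_subspace by auto
  show "0 < s * hN a"
  proof (rule ccontr)
    assume "\<not> 0 < s * hN a"
    moreover have "0 \<le> s * hN a" using semi aL by blast
    ultimately have "s * hN a = 0" by linarith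
    then have ha: "hN a = 0" using s by simp
    let ?P = "proj N C"
    have H0: "omega (?P a) (a' - ?P a') = 0" if a': "a' \<in> L" for a'
    proof -
      define H where "H = omega (?P a) a' + omega (?P a') a"
      have "0 \<le> t * (s * H) + t * t * (s * hN a')" for t
      proof -
        have "a + t *\<^sub>R a' \<in> L" using sL aL a' subspace_add subspace_scale by blast
        then have "0 \<le> s * hN (a + t *\<^sub>R a')" using semi by blast
        also have "hN (a + t *\<^sub>R a') = hN a + t * H + t * t * hN a'"
          by (simp add: hN_def H_def linear_add[OF linP] linear_scale[OF linP] algebra_simps)
        finally show ?thesis using ha by (simp add: algebra_simps)
      qed
      then have "s * H = 0" using quad_zero by blast
      then have H: "H = 0" using s by simp
      define p where "p = ?P a"
      define c where "c = a - ?P a"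
      define p' where "p' = ?P a'"
      define c' where "c' = a' - ?P a'"
      have ap: "a = p + c" "a' = p' + c'" by (simp_all add: p_def c_def p'_def c'_def)
      have pN: "p \<in> N" "p' \<in> N" using P_in by (simp_all add: p_def p'_def)
      have cC: "c \<in> C" "c' \<in> C" using P_rest by (simp_all add: c_def c'_def)
      have "omega a a' = 0" using lag_iso[OF lL aL a'] .
      then have "omega p p' + omega p c' + omega c p' + omega c c' = 0" unfolding ap by simp
      moreover have "omega p p' = 0" using lag_iso[OF lN pN] .
      moreover have "omega c c' = 0" using lag_iso[OF lC cC] .
      ultimately have e1: "omega p c' + omega c p' = 0" by simp
      have "H = omega p (p' + c') + omega p' (p + c)" unfolding H_def p_def p'_def c_def c'_def by simp
      also have "\<dots> = omega p c' + omega p' c" using lag_iso[OF lN pN] lag_iso[OF lN pN(2,1)] by simp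
      finally have "H = omega p c' + omega p' c" .
      then have "omega p c' = 0" using H e1 omega_antisym[of p' c] by simp
      then show ?thesis by (simp add: p_def c'_def)
    qed
    define R where "R y = y - ?P y" for y
    have lR: "linear R" unfolding R_def by (intro linear_compose_sub linear_ident linP)
    have RL: "R ` L = C"
    proof -
      have inj: "inj_on R L"
        unfolding linear_inj_on_iff_eq_0[OF lR sL]
      proof (intro ballI impI)
        fix x assume x: "x \<in> L" "R x = 0"
        then have e: "x = ?P x" by (simp add: R_def)
        from P_in[of x] have "x \<in> N" unfolding e[symmetric] .
        then show "x = 0" using x LN by auto
      qed
      have spL: "span L = L" using sL by (simp add: span_eq_iff)
      have "dim (R ` L) = dim L"
        by (rule dim_image_eq[OF lR]) (simp add: spL inj)
      moreover have "R ` L \<subseteq> C" using P_rest by (auto simp: R_def)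
      moreover have "subspace (R ` L)" by (rule linear_subspace_image[OF lR sL])
      ultimately show ?thesis using subspace_dim_equal[OF _ sC] lag_dim[OF lL] lag_dim[OF lC] by simp
    qed
    have "\<forall>c\<in>C. omega (?P a) c = 0"
    proof
      fix c assume "c \<in> C"
      then obtain a' where a': "a' \<in> L" "c = R a'" using RL by auto
      then show "omega (?P a) c = 0" using H0 by (simp add: R_def)
    qed
    then have "?P a \<in> C" using lag_maximal'[OF lC] by blast
    then have Pa0: "?P a = 0" using P_in[of a] NC by auto
    then have "a \<in> C" using P_rest[of a] by simp
    then show False using aL LC a0 by auto
  qed
qed

end


lemma lagdist_approx:
  fixes M L :: "'n::finite sympl set"
  assumes lM: "M \<in> lagrangians" and y: "y \<in> L" "norm y = 1" and d: "lagdist M L < e"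
  shows "\<exists>m\<in>M. dist y m < e"
proof -
  have M0: "0 \<in> M" by (rule lag_0[OF lM])
  have bdd: "bdd_above ((\<lambda>y. infdist y M) ` (L \<inter> sphere 0 1))"
  proof (rule bdd_aboveI[of _ 1])
    fix r assume "r \<in> (\<lambda>y. infdist y M) ` (L \<inter> sphere 0 1)"
    then obtain z where z: "z \<in> L \<inter> sphere 0 1" "r = infdist z M" by blast
    have "infdist z M \<le> dist z 0" by (rule infdist_le[OF M0])
    also have "\<dots> = 1" using z(1) by simp
    finally show "r \<le> 1" using z(2) by simp
  qed
  have yS: "y \<in> L \<inter> sphere 0 1" using y by simp
  have "infdist y M \<le> (SUP z\<in>L \<inter> sphere 0 1. infdist z M)" by (rule cSUP_upper[OF yS bdd])
  also have "\<dots> \<le> lagdist M L" unfolding lagdist_def by (rule max.cobounded2)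
  finally have "infdist y M < e" using d by simp
  moreover have "infdist y M = (INF a\<in>M. dist y a)" using M0 by (intro infdist_notempty) auto
  ultimately have "(INF a\<in>M. dist y a) < e" by simp
  moreover have "bdd_below ((\<lambda>a. dist y a) ` M)" by (rule bdd_belowI[of _ 0]) auto
  ultimately show ?thesis using cINF_less_iff[of M "\<lambda>a. dist y a" e] M0 by auto
qed

lemma closure_sign:
  fixes L :: "'n::finite sympl set" and g :: "'n sympl \<Rightarrow> real"
  assumes lL: "L \<in> lagrangians"
    and cont: "\<And>m a. m \<longlonglongrightarrow> a \<Longrightarrow> (\<lambda>k. g (m k)) \<longlonglongrightarrow> g a"
    and hom: "\<And>c y. g (c *\<^sub>R y) = c * c * g y"
    and approx: "\<And>e. e > 0 \<Longrightarrow> \<exists>M\<in>lagrangians. lagdist M L < e \<and> (\<forall>m\<in>M. 0 \<le> g m)"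
  shows "\<forall>a\<in>L. 0 \<le> g a"
proof
  fix a assume aL: "a \<in> L"
  show "0 \<le> g a"
  proof (cases "a = 0")
    case True
    have "g (0 *\<^sub>R (0::'n sympl)) = 0 * 0 * g 0" by (rule hom)
    then have "g 0 = 0" by simp
    then show ?thesis using True by simp
  next
    case False
    define y where "y = (1 / norm a) *\<^sub>R a"
    have yL: "y \<in> L" unfolding y_def using aL lag_subspace[OF lL] subspace_scale by blast
    have ny: "norm y = 1" using False by (simp add: y_def)
    have "\<forall>k::nat. \<exists>m. 0 \<le> g m \<and> dist y m < 1 / real (Suc k)"
    proof
      fix k :: nat
      have "(1::real) / real (Suc k) > 0" by simp
      from approx[OF this] obtain M where M: "M \<in> lagrangians" "lagdist M L < 1 / real (Suc k)"
        "\<forall>m\<in>M. 0 \<le> g m" by blast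
      from lagdist_approx[OF M(1) yL ny M(2)] obtain m where "m \<in> M" "dist y m < 1 / real (Suc k)" by blast
      then show "\<exists>m. 0 \<le> g m \<and> dist y m < 1 / real (Suc k)" using M(3) by blast
    qed
    then obtain m where m: "\<And>k. 0 \<le> g (m k)" "\<And>k. dist y (m k) < 1 / real (Suc k)"
      by metis
    have lim: "m \<longlonglongrightarrow> y"
    proof (rule tendstoI)
      fix e :: real assume e: "e > 0"
      obtain N where N: "inverse (real (Suc N)) < e" using reals_Archimedean[OF e] by blast
      show "\<forall>\<^sub>F k in sequentially. dist (m k) y < e"
      proof (rule eventually_sequentiallyI[of N])
        fix k assume k: "N \<le> k"
        have "dist (m k) y < 1 / real (Suc k)" using m(2)[of k] by (simp add: dist_commute)
        also have "\<dots> \<le> 1 / real (Suc N)" using k by (simp add: frac_le)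
        also have "\<dots> < e" using N by (simp add: inverse_eq_divide)
        finally show "dist (m k) y < e" .
      qed
    qed
    have "0 \<le> g y" by (rule LIMSEQ_le_const[OF cont[OF lim]]) (use m(1) in blast)
    moreover have "g a = norm a * norm a * g y"
    proof -
      have "a = norm a *\<^sub>R y" using False by (simp add: y_def)
      then have "g a = g (norm a *\<^sub>R y)" by simp
      then show ?thesis by (simp only: hom)
    qed
    ultimately show ?thesis by simp
  qed
qed

lemma limit_triple:
  fixes N C1 C2 L1 L2 L3 :: "'n::finite sympl set"
  assumes lN: "N \<in> lagrangians" and lC1: "C1 \<in> lagrangians" and lC2: "C2 \<in> lagrangians"
    and lL1: "L1 \<in> lagrangians" and lL2: "L2 \<in> lagrangians" and lL3: "L3 \<in> lagrangians"
    and NC1: "N \<inter> C1 = {0}" and NC2: "N \<inter> C2 = {0}"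
    and L1N: "L1 \<inter> N = {0}" and L2N: "L2 \<inter> N = {0}" and L3N: "L3 \<inter> N = {0}"
    and L1C1: "L1 \<inter> C1 = {0}" and L2C1: "L2 \<inter> C1 = {0}" and L3C1: "L3 \<inter> C1 = {0}"
    and L2C2: "L2 \<inter> C2 = {0}" and L3C2: "L3 \<inter> C2 = {0}"
    and s1: "\<forall>a\<in>L1. 0 \<le> hN N C1 a" and s2: "\<forall>a\<in>L2. 0 \<le> - hN N C1 a"
    and s3: "\<forall>a\<in>L3. 0 \<le> - hN N C1 a" and s4: "\<forall>a\<in>L2. 0 \<le> hN N C2 a"
    and s5: "\<forall>a\<in>L3. 0 \<le> - hN N C2 a"
  shows "maslov L1 L2 L3 = int CARD('n)"
proof -
  have p1: "\<forall>a\<in>L1. a \<noteq> 0 \<longrightarrow> 0 < hN N C1 a"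
    using hN_strict[OF lN lC1 NC1 lL1 L1N L1C1, of 1] s1 by simp
  have p2: "\<forall>a\<in>L2. a \<noteq> 0 \<longrightarrow> hN N C1 a < 0"
    using hN_strict[OF lN lC1 NC1 lL2 L2N L2C1, of "-1"] s2 by simp
  have p3: "\<forall>a\<in>L3. a \<noteq> 0 \<longrightarrow> hN N C1 a < 0"
    using hN_strict[OF lN lC1 NC1 lL3 L3N L3C1, of "-1"] s3 by simp
  have p4: "\<forall>a\<in>L2. a \<noteq> 0 \<longrightarrow> 0 < hN N C2 a"
    using hN_strict[OF lN lC2 NC2 lL2 L2N L2C2, of 1] s4 by simp
  have p5: "\<forall>a\<in>L3. a \<noteq> 0 \<longrightarrow> hN N C2 a < 0"
    using hN_strict[OF lN lC2 NC2 lL3 L3N L3C2, of "-1"] s5 by simp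
  have z1: "0 \<in> L1" "0 \<in> L2" "0 \<in> L3" using lag_0 lL1 lL2 lL3 by auto
  have L12: "L1 \<inter> L2 = {0}"
  proof -
    have "a = 0" if "a \<in> L1" "a \<in> L2" for a using p1 p2 that by force
    then show ?thesis using z1 by auto
  qed
  have L13: "L1 \<inter> L3 = {0}"
  proof -
    have "a = 0" if "a \<in> L1" "a \<in> L3" for a using p1 p3 that by force
    then show ?thesis using z1 by auto
  qed
  have L23: "L2 \<inter> L3 = {0}"
  proof -
    have "a = 0" if "a \<in> L2" "a \<in> L3" for a using p4 p5 that by force
    then show ?thesis using z1 by auto
  qed
  have g12: "omega x y < 0" if "x \<in> N" "y \<in> L1" "x + y \<in> L2" "x \<noteq> 0" for x y
  proof -
    have e: "omega x y = hN N C1 (x + y) - hN N C1 y" using hN_shift[OF lN lC1 NC1 that(1)] by simp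
    have "hN N C1 (x + y) \<le> 0" using s2 that(3) by fastforce
    moreover have "hN N C1 y \<ge> 0" using s1 that(2) by blast
    moreover have "y \<noteq> 0 \<or> x + y \<noteq> 0" using that(4) by auto
    moreover have "y \<noteq> 0 \<Longrightarrow> hN N C1 y > 0" using p1 that(2) by blast
    moreover have "x + y \<noteq> 0 \<Longrightarrow> hN N C1 (x + y) < 0" using p2 that(3) by blast
    ultimately show ?thesis unfolding e by (elim disjE) linarith+
  qed
  have g23: "omega x y < 0" if "x \<in> N" "y \<in> L2" "x + y \<in> L3" "x \<noteq> 0" for x y
  proof -
    have e: "omega x y = hN N C2 (x + y) - hN N C2 y" using hN_shift[OF lN lC2 NC2 that(1)] by simp
    have "hN N C2 (x + y) \<le> 0" using s5 that(3) by fastforce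
    moreover have "hN N C2 y \<ge> 0" using s4 that(2) by blast
    moreover have "y \<noteq> 0 \<or> x + y \<noteq> 0" using that(4) by auto
    moreover have "y \<noteq> 0 \<Longrightarrow> hN N C2 y > 0" using p4 that(2) by blast
    moreover have "x + y \<noteq> 0 \<Longrightarrow> hN N C2 (x + y) < 0" using p5 that(3) by blast
    ultimately show ?thesis unfolding e by (elim disjE) linarith+
  qed
  have sN: "subspace N" and sL2: "subspace L2" using lN lL2 lag_subspace by auto
  have NL2: "N \<inter> L2 = {0}" using L2N by auto
  have g123: "\<forall>x\<in>L1. \<forall>y\<in>L2. x + y \<in> L3 \<longrightarrow> x \<noteq> 0 \<longrightarrow> omega x y < 0"
  proof (intro ballI impI)
    fix x y assume x: "x \<in> L1" and y: "y \<in> L2" and xy: "x + y \<in> L3" and x0: "x \<noteq> 0"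
    obtain a b where a: "a \<in> N" and b: "b \<in> L2" and xab: "x = a + b"
      using transverse_sum[OF lN lL2 NL2] by blast
    have a0: "a \<noteq> 0"
    proof
      assume "a = 0"
      then have "x \<in> L2" using xab b by simp
      then show False using x x0 L12 by auto
    qed
    have ma: "- a \<in> N" using a sN subspace_neg by blast
    have "omega (- a) x < 0" by (rule g12[OF ma x]) (use xab b a0 in simp_all)
    moreover have "omega a (b + y) < 0"
    proof (rule g23[OF a])
      show "b + y \<in> L2" using b y sL2 subspace_add by blast
      show "a + (b + y) \<in> L3" using xy xab by (simp add: add.assoc)
    qed (use a0 in simp)
    moreover have "omega x y = omega (- a) x + omega a (b + y)"
    proof -
      have "omega b y = 0" by (rule lag_iso[OF lL2 b y])
      moreover have "omega a a = 0" by simp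
      ultimately show ?thesis unfolding xab by simp
    qed
    ultimately show "omega x y < 0" by simp
  qed
  show ?thesis using maslov_transverse(1)[OF lL1 lL2 lL3 L12 L23 L13] g123 by blast
qed


section \<open>Circle combinatorics\<close>

lemma cis_period: "cis (z + 2 * pi * real_of_int k) = cis z"
proof -
  have "cis (2 * pi * real_of_int k) = 1" by (rule cis_multiple_2pi) simp
  then show ?thesis using cis_mult[of z "2 * pi * real_of_int k"] by simp
qed

lemma cis_eqD: "cis a = cis b \<Longrightarrow> \<exists>k::int. a = b + 2 * pi * real_of_int k"
proof -
  assume "cis a = cis b"
  then have "cos a = cos b" "sin a = sin b" by (metis cis.sel(1), metis cis.sel(2))
  then show ?thesis using sin_cos_eq_iff[of a b] by auto
qed

lemma int_eq_one:
  fixes m :: int and d :: real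
  assumes "0 < 2 * pi * real_of_int m - d" "2 * pi * real_of_int m - d < 2 * pi" "0 < d" "d < 2 * pi"
  shows "m = 1"
proof -
  have "2 * pi * real_of_int m > 0" using assms(1,3) by linarith
  then have "real_of_int m > 0" using pi_gt_zero by (simp add: zero_less_mult_iff)
  then have m1: "m \<ge> 1" by simp
  have "2 * pi * real_of_int m < 2 * pi * 2" using assms(2,4) by linarith
  then have "real_of_int m < 2" using pi_gt_zero by simp
  then have "m < 2" by simp
  then show ?thesis using m1 by simp
qed

lemma cis_neq:
  assumes "a < b" "b < a + 2 * pi"
  shows "cis a \<noteq> cis b"
proof
  assume "cis a = cis b"
  then obtain k :: int where k: "b = a + 2 * pi * real_of_int k" using cis_eqD by metis
  have "0 < 2 * pi * real_of_int k" using k assms by linarith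
  then have "real_of_int k > 0" using pi_gt_zero by (simp add: zero_less_mult_iff)
  then have "k \<ge> 1" by simp
  then have "2 * pi * real_of_int k \<ge> 2 * pi" using pi_gt_zero by simp
  then show False using k assms by linarith
qed

lemma ccw_of: "a < b \<Longrightarrow> b < c \<Longrightarrow> c < a + 2 * pi \<Longrightarrow> ccw (cis a) (cis b) (cis c)"
  unfolding ccw_def by blast

lemma ccw_excl:
  assumes "ccw x y z" "ccw z y x"
  shows False
proof -
  obtain t1 t2 t3 where t: "t1 < t2" "t2 < t3" "t3 < t1 + 2 * pi" "x = cis t1" "y = cis t2" "z = cis t3"
    using assms(1) unfolding ccw_def by blast
  obtain s1 s2 s3 where s: "s1 < s2" "s2 < s3" "s3 < s1 + 2 * pi" "z = cis s1" "y = cis s2" "x = cis s3"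
    using assms(2) unfolding ccw_def by blast
  obtain k1 :: int where k1: "t1 = s3 + 2 * pi * real_of_int k1" using cis_eqD t(4) s(6) by metis
  obtain k2 :: int where k2: "t2 = s2 + 2 * pi * real_of_int k2" using cis_eqD t(5) s(5) by metis
  obtain k3 :: int where k3: "t3 = s1 + 2 * pi * real_of_int k3" using cis_eqD t(6) s(4) by metis
  have "k2 - k1 = 1"
    by (rule int_eq_one[of _ "s3 - s2"]) (use t s k1 k2 in \<open>simp_all add: algebra_simps\<close>)
  moreover have "k3 - k2 = 1"
    by (rule int_eq_one[of _ "s2 - s1"]) (use t s k2 k3 in \<open>simp_all add: algebra_simps\<close>)
  ultimately have "k3 - k1 = 2" by simp
  then have "real_of_int k3 - real_of_int k1 = 2" by (metis of_int_diff of_int_numeral)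
  then have "t3 - t1 = s1 - s3 + 4 * pi" using k1 k3 by (simp add: algebra_simps)
  then show False using t s by linarith
qed

lemma beta1_pos:
  assumes "a < b" "b < c" "c < a + 2 * pi"
  shows "beta1 (cis a) (cis b) (cis c) = 1"
proof -
  have "cis a \<noteq> cis b" "cis b \<noteq> cis c" "cis a \<noteq> cis c"
    using cis_neq assms by (metis less_trans add_less_cancel_right less_add_same_cancel1 pi_gt_zero)+
  then show ?thesis using ccw_of[OF assms] by (simp add: beta1_def)
qed

lemma beta1_neg:
  assumes "a < b" "b < c" "c < a + 2 * pi"
  shows "beta1 (cis c) (cis b) (cis a) = -1"
proof -
  have "cis a \<noteq> cis b" "cis b \<noteq> cis c" "cis a \<noteq> cis c"
    using cis_neq assms by (metis less_trans add_less_cancel_right less_add_same_cancel1 pi_gt_zero)+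
  moreover have "\<not> ccw (cis c) (cis b) (cis a)" using ccw_excl ccw_of[OF assms] by blast
  ultimately show ?thesis using ccw_of[OF assms] by (auto simp: beta1_def)
qed

lemma ccw_either:
  assumes "norm x = 1" "norm y = 1" "norm z = 1" "x \<noteq> y" "y \<noteq> z" "x \<noteq> z"
  shows "ccw x y z \<or> ccw z y x"
proof -
  have rep: "w = cis (Arg w)" if "norm w = 1" for w
  proof -
    have "w \<noteq> 0" using that by auto
    then have "cis (Arg w) = sgn w" by (rule cis_Arg)
    also have "\<dots> = w" using that by (simp add: sgn_div_norm)
    finally show ?thesis by simp
  qed
  define a where "a = Arg x"
  define b where "b = Arg y"
  define c where "c = Arg z"
  have xa: "x = cis a" and yb: "y = cis b" and zc: "z = cis c"
    using rep assms by (auto simp: a_def b_def c_def)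
  have bnd: "- pi < a" "a \<le> pi" "- pi < b" "b \<le> pi" "- pi < c" "c \<le> pi"
    using Arg_bounded unfolding a_def b_def c_def by auto
  have ab: "a \<noteq> b" and bc: "b \<noteq> c" and ac: "a \<noteq> c" using assms xa yb zc by auto
  have sh: "cis (t - 2 * pi) = cis t" for t using cis_period[of t "-1"] by simp
  consider "a < b \<and> b < c" | "b < c \<and> c < a" | "c < a \<and> a < b"
    | "a < c \<and> c < b" | "c < b \<and> b < a" | "b < a \<and> a < c"
    using ab bc ac by linarith
  then show ?thesis
  proof cases
    case 1 then show ?thesis using ccw_of[of a b c] bnd xa yb zc by auto
  next
    case 2
    have "ccw (cis (a - 2 * pi)) (cis b) (cis c)" by (rule ccw_of) (use 2 bnd in auto)
    then show ?thesis using sh xa yb zc by auto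
  next
    case 3
    have "ccw (cis a) (cis b) (cis (c + 2 * pi))" by (rule ccw_of) (use 3 bnd in auto)
    then show ?thesis using sh[of "c + 2 * pi"] xa yb zc by auto
  next
    case 4
    have "ccw (cis c) (cis b) (cis (a + 2 * pi))" by (rule ccw_of) (use 4 bnd in auto)
    then show ?thesis using sh[of "a + 2 * pi"] xa yb zc by auto
  next
    case 5 then show ?thesis using ccw_of[of c b a] bnd xa yb zc by auto
  next
    case 6
    have "ccw (cis (c - 2 * pi)) (cis b) (cis a)" by (rule ccw_of) (use 6 bnd in auto)
    then show ?thesis using sh xa yb zc by auto
  qed
qed

lemma cis_near:
  assumes mu: "\<mu> > 0"
  shows "\<exists>e>0. \<forall>z t. dist (cis z) (cis t) < e \<longrightarrow> (\<exists>z'. cis z' = cis z \<and> \<bar>z' - t\<bar> < \<mu>)"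
proof -
  define m where "m = min \<mu> pi"
  have m0: "0 < m" "m \<le> pi" "m \<le> \<mu>" using mu pi_gt_zero by (auto simp: m_def)
  have cm: "cos m < 1" using cos_monotone_0_pi[of 0 m] m0 by simp
  define e where "e = sqrt (2 - 2 * cos m)"
  have e0: "e > 0" using cm by (simp add: e_def)
  have nsq: "(cmod (cis w - 1))\<^sup>2 = 2 - 2 * cos w" for w
  proof -
    have "(cmod (cis w - 1))\<^sup>2 = (cos w - 1)\<^sup>2 + (sin w)\<^sup>2" by (simp add: cmod_power2)
    also have "\<dots> = 2 - 2 * cos w" using sin_cos_squared_add[of w] by (simp add: power2_eq_square algebra_simps)
    finally show ?thesis .
  qed
  show ?thesis
  proof (rule exI[of _ e], intro conjI allI impI e0)
    fix z t assume d: "dist (cis z) (cis t) < e"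
    define k where "k = \<lfloor>(z - t + pi) / (2 * pi)\<rfloor>"
    define z' where "z' = z + 2 * pi * real_of_int (- k)"
    have cz: "cis z' = cis z" unfolding z'_def by (rule cis_period)
    have k1: "real_of_int k \<le> (z - t + pi) / (2 * pi)" "(z - t + pi) / (2 * pi) < real_of_int k + 1"
      unfolding k_def by linarith+
    have "2 * pi * real_of_int k \<le> z - t + pi" using k1(1) pi_gt_zero by (simp add: field_simps)
    moreover have "z - t + pi < 2 * pi * real_of_int k + 2 * pi" using k1(2) pi_gt_zero by (simp add: field_simps)
    ultimately have w1: "- pi \<le> z' - t" "z' - t < pi" unfolding z'_def by (simp_all add: algebra_simps)
    define w where "w = z' - t"
    have "cis z - cis t = cis t * (cis w - 1)" using cz cis_mult[of t w] by (simp add: w_def algebra_simps)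
    then have "dist (cis z) (cis t) = cmod (cis w - 1)" by (simp add: dist_norm norm_mult)
    then have lt: "cmod (cis w - 1) < e" using d by simp
    have "\<bar>w\<bar> < m"
    proof (rule ccontr)
      assume "\<not> \<bar>w\<bar> < m"
      then have "m \<le> \<bar>w\<bar>" "\<bar>w\<bar> \<le> pi" using w1 by (auto simp: w_def)
      then have "cos \<bar>w\<bar> \<le> cos m" using cos_monotone_0_pi_le[of m "\<bar>w\<bar>"] m0 by simp
      then have "cos w \<le> cos m" by (cases "w \<ge> 0") auto
      then have "e\<^sup>2 \<le> (cmod (cis w - 1))\<^sup>2" using cm by (simp add: e_def nsq)
      then have "e \<le> cmod (cis w - 1)" using e0 by (simp add: power2_le_iff_abs_le)
      then show False using lt by simp
    qed
    then show "\<exists>z'. cis z' = cis z \<and> \<bar>z' - t\<bar> < \<mu>" using cz m0 by (intro exI[of _ z']) (simp add: w_def)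
  qed
qed

lemma interval_rep:
  assumes mu: "\<mu> > 0"
  shows "\<exists>a b. 0 \<le> a \<and> a < b \<and> b \<le> 2 * pi \<and> (\<forall>z. a < z \<and> z < b \<longrightarrow> (\<exists>z'. cis z' = cis z \<and> \<bar>z' - g\<bar> < \<mu>))"
proof -
  define k where "k = \<lfloor>g / (2 * pi)\<rfloor>"
  define g0 where "g0 = g - 2 * pi * real_of_int k"
  have k1: "real_of_int k \<le> g / (2 * pi)" "g / (2 * pi) < real_of_int k + 1" unfolding k_def by linarith+
  have g0b: "0 \<le> g0" "g0 < 2 * pi" using k1 pi_gt_zero unfolding g0_def by (simp_all add: field_simps)
  define a where "a = max (g0 - \<mu>) 0"
  define b where "b = min (g0 + \<mu>) (2 * pi)"
  have "0 \<le> a" "a < b" "b \<le> 2 * pi" using g0b mu pi_gt_zero by (auto simp: a_def b_def)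
  moreover have "\<exists>z'. cis z' = cis z \<and> \<bar>z' - g\<bar> < \<mu>" if "a < z" "z < b" for z
  proof (intro exI[of _ "z + 2 * pi * real_of_int k"] conjI)
    show "cis (z + 2 * pi * real_of_int k) = cis z" by (rule cis_period)
    show "\<bar>z + 2 * pi * real_of_int k - g\<bar> < \<mu>" using that by (auto simp: a_def b_def g0_def)
  qed
  ultimately show ?thesis by blast
qed

lemma AE_interval_ex:
  fixes a b :: real
  assumes ab: "a < b" and P: "AE t in lebesgue. P t"
  shows "\<exists>t. a < t \<and> t < b \<and> P t"
proof (rule ccontr)
  assume "\<not> (\<exists>t. a < t \<and> t < b \<and> P t)"
  then have "AE t in lebesgue. t \<notin> {a<..<b}" using P by (auto elim: AE_mp)
  then have "AE t in lborel. t \<notin> {a<..<b}" by (simp add: AE_completion_iff)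
  moreover have eq: "{x \<in> space lborel. \<not> (x \<notin> {a<..<b})} = {a<..<b}" by auto
  ultimately have "emeasure lborel {a<..<b} = 0"
    using AE_iff_measurable[OF _ eq] by simp
  moreover have "emeasure lborel {a<..<b} = ennreal (b - a)" using ab by simp
  ultimately show False using ab by simp
qed

lemma AE_extract:
  assumes "\<not> (AE t in lebesgue. t \<in> D \<longrightarrow> \<not> S t)" and "AE t in lebesgue. Q t"
  shows "\<exists>t. t \<in> D \<and> S t \<and> Q t"
proof (rule ccontr)
  assume "\<not> (\<exists>t. t \<in> D \<and> S t \<and> Q t)"
  then have "AE t in lebesgue. t \<in> D \<longrightarrow> \<not> S t" using assms(2) by (auto elim: AE_mp)
  then show False using assms(1) by simp
qed

lemma AE_triple:
  fixes G :: "real \<times> real \<times> real \<Rightarrow> bool"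
  assumes "AE p in lebesgue. G p"
  shows "AE a in lebesgue. AE b in lebesgue. AE c in lebesgue. G (a, b, c)"
proof -
  have "AE p in (lborel :: (real \<times> real \<times> real) measure). G p" using assms by (simp add: AE_completion_iff)
  moreover have e3: "(lborel \<Otimes>\<^sub>M lborel :: (real \<times> real \<times> real) measure) = lborel" by (rule lborel_prod)
  ultimately have "AE p in (lborel \<Otimes>\<^sub>M (lborel :: (real \<times> real) measure)). G p" by (simp only: e3)
  then have "AE a in lborel. AE q in (lborel :: (real \<times> real) measure). G (a, q)"
    by (rule lborel_pair.AE_pair)
  then have h: "AE a in lborel. AE b in lborel. AE c in lborel. G (a, b, c)"
  proof (rule AE_mp[OF _ AE_I2], intro impI)
    fix a assume "AE q in (lborel :: (real \<times> real) measure). G (a, q)"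
    moreover have e2: "(lborel \<Otimes>\<^sub>M lborel :: (real \<times> real) measure) = lborel" by (rule lborel_prod)
    ultimately have "AE q in (lborel \<Otimes>\<^sub>M (lborel :: real measure)). G (a, q)" by (simp only: e2)
    then show "AE b in lborel. AE c in lborel. G (a, b, c)" by (rule lborel_pair.AE_pair)
  qed
  show ?thesis
    using h by (simp add: AE_completion_iff)
qed


lemma lag_phi:
  assumes "lag_measurable \<phi>"
  shows "\<phi> (cis t) \<in> lagrangians"
  using assms unfolding lag_measurable_def by simp

lemma ess_graphD:
  assumes "(x, L) \<in> ess_graph \<phi>"
  shows "L \<in> lagrangians" "x \<in> sphere 0 1"
    "\<And>e. e > 0 \<Longrightarrow> \<not> (AE t in lebesgue. t \<in> {0..<2*pi} \<longrightarrow>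
                 \<not> (dist (cis t) x < e \<and> lagdist (\<phi> (cis t)) L < e))"
  using assms unfolding ess_graph_def by auto

lemma approx_step:
  fixes \<phi> :: "complex \<Rightarrow> 'n::finite sympl set" and N C L :: "'n sympl set" and \<sigma> :: int
  assumes meas: "lag_measurable \<phi>"
    and ess: "(x, L) \<in> ess_graph \<phi>"
    and lN: "N \<in> lagrangians" and lC: "C \<in> lagrangians" and NC: "N \<inter> C = {0}"
    and good: "AE t in lebesgue. t \<in> {0..<2*pi} \<longrightarrow>
        maslov N C (\<phi> (cis t)) = int CARD('n) * beta1 (cis u) (cis c) (cis t) \<and>
        N \<inter> \<phi> (cis t) = {0} \<and> C \<inter> \<phi> (cis t) = {0}"
    and orient: "\<exists>e0>0. \<forall>t. dist (cis t) x < e0 \<longrightarrow> beta1 (cis u) (cis c) (cis t) = \<sigma>"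
    and sig: "\<sigma> = 1 \<or> \<sigma> = -1"
  shows "\<forall>a\<in>L. 0 \<le> - real_of_int \<sigma> * hN N C a"
proof (rule closure_sign)
  show lL: "L \<in> lagrangians" using ess_graphD(1)[OF ess] .
  show "(\<lambda>k. - real_of_int \<sigma> * hN N C (m k)) \<longlonglongrightarrow> - real_of_int \<sigma> * hN N C a" if "m \<longlonglongrightarrow> a" for m a
    by (intro tendsto_mult_left hN_tendsto[OF lN lC NC] that)
  show "- real_of_int \<sigma> * hN N C (c' *\<^sub>R y) = c' * c' * (- real_of_int \<sigma> * hN N C y)" for c' y
    using hN_scale[OF lN lC NC] by simp
  fix e :: real assume e: "e > 0"
  obtain e0 where e0: "e0 > 0" "\<forall>t. dist (cis t) x < e0 \<longrightarrow> beta1 (cis u) (cis c) (cis t) = \<sigma>"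
    using orient by blast
  define e' where "e' = min e e0"
  have e'0: "e' > 0" using e e0 by (simp add: e'_def)
  from AE_extract[OF ess_graphD(3)[OF ess e'0] good]
  obtain t where t: "t \<in> {0..<2*pi}" "dist (cis t) x < e'" "lagdist (\<phi> (cis t)) L < e'"
    and mas: "maslov N C (\<phi> (cis t)) = int CARD('n) * beta1 (cis u) (cis c) (cis t)"
    and tr: "N \<inter> \<phi> (cis t) = {0}" "C \<inter> \<phi> (cis t) = {0}"
    by blast
  let ?M = "\<phi> (cis t)"
  have lM: "?M \<in> lagrangians" by (rule lag_phi[OF meas])
  have b: "beta1 (cis u) (cis c) (cis t) = \<sigma>" using e0(2) t(2) by (simp add: e'_def)
  have "\<forall>m\<in>?M. 0 \<le> - real_of_int \<sigma> * hN N C m"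
  proof (cases "\<sigma> = 1")
    case True
    then have "maslov N C ?M = int CARD('n)" using mas b by simp
    then have h: "\<forall>m\<in>?M. m \<noteq> 0 \<longrightarrow> hN N C m < 0"
      by (rule hN_from_maslov(1)[OF lN lC NC lM tr(2) tr(1)])
    show ?thesis
    proof
      fix m assume "m \<in> ?M"
      then show "0 \<le> - real_of_int \<sigma> * hN N C m"
        using h True hN_0[OF lN lC NC] by (cases "m = 0") (auto simp: less_imp_le)
    qed
  next
    case False
    then have s: "\<sigma> = -1" using sig by simp
    then have "maslov N C ?M = - int CARD('n)" using mas b by simp
    then have h: "\<forall>m\<in>?M. m \<noteq> 0 \<longrightarrow> hN N C m > 0"
      by (rule hN_from_maslov(2)[OF lN lC NC lM tr(2) tr(1)])
    show ?thesis
    proof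
      fix m assume "m \<in> ?M"
      then show "0 \<le> - real_of_int \<sigma> * hN N C m"
        using h s hN_0[OF lN lC NC] by (cases "m = 0") (auto simp: less_imp_le)
    qed
  qed
  then show "\<exists>M\<in>lagrangians. lagdist M L < e \<and> (\<forall>m\<in>M. 0 \<le> - real_of_int \<sigma> * hN N C m)"
    using lM t(3) by (intro bexI[of _ ?M]) (auto simp: e'_def)
qed


lemma core:
  fixes \<phi> :: "complex \<Rightarrow> 'n::finite sympl set"
  assumes meas: "lag_measurable \<phi>"
    and h5: "AE p in lebesgue. p \<in> {0..<2*pi} \<times> {0..<2*pi} \<times> {0..<2*pi} \<longrightarrow>
           maslov (\<phi> (cis (fst p))) (\<phi> (cis (fst (snd p)))) (\<phi> (cis (snd (snd p))))
             = int CARD('n) * beta1 (cis (fst p)) (cis (fst (snd p))) (cis (snd (snd p)))"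
    and h6: "\<forall>L\<in>lagrangians. AE t in lebesgue. t \<in> {0..<2*pi} \<longrightarrow> \<phi> (cis t) \<inter> L = {0}"
    and ess1: "(cis t1, L1) \<in> ess_graph \<phi>" and ess2: "(cis t2, L2) \<in> ess_graph \<phi>"
    and ess3: "(cis t3, L3) \<in> ess_graph \<phi>"
    and t: "t1 < t2" "t2 < t3" "t3 < t1 + 2*pi"
  shows "maslov L1 L2 L3 = int CARD('n)"
proof -
  define D where "D = {0..<2*pi::real}"
  define \<mu> where "\<mu> = min (t2 - t1) (min (t3 - t2) (t1 + 2*pi - t3)) / 4"
  have mu0: "\<mu> > 0" using t by (simp add: \<mu>_def)
  have mu1: "4 * \<mu> \<le> t2 - t1" "4 * \<mu> \<le> t3 - t2" "4 * \<mu> \<le> t1 + 2*pi - t3" by (simp_all add: \<mu>_def)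
  define G where "G a b c \<longleftrightarrow> (a \<in> D \<and> b \<in> D \<and> c \<in> D \<longrightarrow>
       maslov (\<phi> (cis a)) (\<phi> (cis b)) (\<phi> (cis c)) = int CARD('n) * beta1 (cis a) (cis b) (cis c))" for a b c
  have AE3: "AE a in lebesgue. AE b in lebesgue. AE c in lebesgue. G a b c"
    using AE_triple[OF h5] by (simp add: G_def D_def)
  have lL1: "L1 \<in> lagrangians" and lL2: "L2 \<in> lagrangians" and lL3: "L3 \<in> lagrangians"
    using ess_graphD(1) ess1 ess2 ess3 by auto
  have lphi: "\<phi> (cis s) \<in> lagrangians" for s by (rule lag_phi[OF meas])
  have h6': "AE s in lebesgue. s \<in> D \<longrightarrow> \<phi> (cis s) \<inter> L = {0}" if "L \<in> lagrangians" for L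
    using h6 that by (simp add: D_def)
  have cisp: "cis (s - 2 * pi) = cis s" for s using cis_period[of s "-1"] by simp
  obtain aN bN where IN: "0 \<le> aN" "aN < bN" "bN \<le> 2*pi"
    and repN: "\<forall>z. aN < z \<and> z < bN \<longrightarrow> (\<exists>z'. cis z' = cis z \<and> \<bar>z' - (t3 + t1 + 2*pi) / 2\<bar> < \<mu>)"
    using interval_rep[OF mu0] by blast
  define PU where "PU s \<longleftrightarrow> (AE b in lebesgue. AE c in lebesgue. G s b c) \<and> (s \<in> D \<longrightarrow> \<phi> (cis s) \<inter> L1 = {0})
      \<and> (s \<in> D \<longrightarrow> \<phi> (cis s) \<inter> L2 = {0}) \<and> (s \<in> D \<longrightarrow> \<phi> (cis s) \<inter> L3 = {0})" for s
  have PPu: "AE s in lebesgue. PU s"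
    using AE3 h6'[OF lL1] h6'[OF lL2] h6'[OF lL3] unfolding PU_def by eventually_elim auto
  obtain u where u0: "aN < u" "u < bN" "PU u"
    using AE_interval_ex[OF IN(2) PPu] by blast
  have u: "AE b in lebesgue. AE c in lebesgue. G u b c"
    "u \<in> D \<longrightarrow> \<phi> (cis u) \<inter> L1 = {0}" "u \<in> D \<longrightarrow> \<phi> (cis u) \<inter> L2 = {0}" "u \<in> D \<longrightarrow> \<phi> (cis u) \<inter> L3 = {0}"
    using u0(3) unfolding PU_def by simp_all
  have uD: "u \<in> D" using u0(1,2) IN by (simp add: D_def)
  obtain u' where u': "cis u' = cis u" "\<bar>u' - (t3 + t1 + 2*pi) / 2\<bar> < \<mu>" using repN u0(1,2) by blast
  define N where "N = \<phi> (cis u)"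
  have lN: "N \<in> lagrangians" by (simp add: N_def lphi)
  have NL: "L1 \<inter> N = {0}" "L2 \<inter> N = {0}" "L3 \<inter> N = {0}" using u(2-4) uD by (simp_all add: N_def Int_commute)
  obtain a1 b1 where I1: "0 \<le> a1" "a1 < b1" "b1 \<le> 2*pi"
    and rep1: "\<forall>z. a1 < z \<and> z < b1 \<longrightarrow> (\<exists>z'. cis z' = cis z \<and> \<bar>z' - (t1 + t2) / 2\<bar> < \<mu>)"
    using interval_rep[OF mu0] by blast
  define PC1 where "PC1 s \<longleftrightarrow> (AE c in lebesgue. G u s c) \<and> (s \<in> D \<longrightarrow> \<phi> (cis s) \<inter> N = {0})
      \<and> (s \<in> D \<longrightarrow> \<phi> (cis s) \<inter> L1 = {0}) \<and> (s \<in> D \<longrightarrow> \<phi> (cis s) \<inter> L2 = {0})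
      \<and> (s \<in> D \<longrightarrow> \<phi> (cis s) \<inter> L3 = {0})" for s
  have PPc1: "AE s in lebesgue. PC1 s"
    using u(1) h6'[OF lN] h6'[OF lL1] h6'[OF lL2] h6'[OF lL3] unfolding PC1_def by eventually_elim auto
  obtain c1 where c10: "a1 < c1" "c1 < b1" "PC1 c1"
    using AE_interval_ex[OF I1(2) PPc1] by blast
  have c1: "AE c in lebesgue. G u c1 c"
    "c1 \<in> D \<longrightarrow> \<phi> (cis c1) \<inter> N = {0}"
    "c1 \<in> D \<longrightarrow> \<phi> (cis c1) \<inter> L1 = {0}" "c1 \<in> D \<longrightarrow> \<phi> (cis c1) \<inter> L2 = {0}"
    "c1 \<in> D \<longrightarrow> \<phi> (cis c1) \<inter> L3 = {0}"
    using c10(3) unfolding PC1_def by simp_all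
  have c1D: "c1 \<in> D" using c10(1,2) I1 by (simp add: D_def)
  obtain c1' where c1': "cis c1' = cis c1" "\<bar>c1' - (t1 + t2) / 2\<bar> < \<mu>" using rep1 c10(1,2) by blast
  define C1 where "C1 = \<phi> (cis c1)"
  have lC1: "C1 \<in> lagrangians" by (simp add: C1_def lphi)
  have NC1: "N \<inter> C1 = {0}" using c1(2) c1D by (simp_all add: C1_def Int_commute)
  have LC1: "L1 \<inter> C1 = {0}" "L2 \<inter> C1 = {0}" "L3 \<inter> C1 = {0}" using c1(3-5) c1D by (simp_all add: C1_def Int_commute)
  obtain a2 b2 where I2: "0 \<le> a2" "a2 < b2" "b2 \<le> 2*pi"
    and rep2: "\<forall>z. a2 < z \<and> z < b2 \<longrightarrow> (\<exists>z'. cis z' = cis z \<and> \<bar>z' - (t2 + t3) / 2\<bar> < \<mu>)"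
    using interval_rep[OF mu0] by blast
  define PC2 where "PC2 s \<longleftrightarrow> (AE c in lebesgue. G u s c) \<and> (s \<in> D \<longrightarrow> \<phi> (cis s) \<inter> N = {0})
      \<and> (s \<in> D \<longrightarrow> \<phi> (cis s) \<inter> L2 = {0}) \<and> (s \<in> D \<longrightarrow> \<phi> (cis s) \<inter> L3 = {0})" for s
  have PPc2: "AE s in lebesgue. PC2 s"
    using u(1) h6'[OF lN] h6'[OF lL2] h6'[OF lL3] unfolding PC2_def by eventually_elim auto
  obtain c2 where c20: "a2 < c2" "c2 < b2" "PC2 c2"
    using AE_interval_ex[OF I2(2) PPc2] by blast
  have c2: "AE c in lebesgue. G u c2 c"
    "c2 \<in> D \<longrightarrow> \<phi> (cis c2) \<inter> N = {0}"
    "c2 \<in> D \<longrightarrow> \<phi> (cis c2) \<inter> L2 = {0}" "c2 \<in> D \<longrightarrow> \<phi> (cis c2) \<inter> L3 = {0}"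
    using c20(3) unfolding PC2_def by simp_all
  have c2D: "c2 \<in> D" using c20(1,2) I2 by (simp add: D_def)
  obtain c2' where c2': "cis c2' = cis c2" "\<bar>c2' - (t2 + t3) / 2\<bar> < \<mu>" using rep2 c20(1,2) by blast
  define C2 where "C2 = \<phi> (cis c2)"
  have lC2: "C2 \<in> lagrangians" by (simp add: C2_def lphi)
  have NC2: "N \<inter> C2 = {0}" using c2(2) c2D by (simp_all add: C2_def Int_commute)
  have LC2: "L2 \<inter> C2 = {0}" "L3 \<inter> C2 = {0}" using c2(3,4) c2D by (simp_all add: C2_def Int_commute)
  have Deq: "{0..<2*pi} = D" by (simp add: D_def)
  have good1: "AE s in lebesgue. s \<in> {0..<2*pi} \<longrightarrow>
        maslov N C1 (\<phi> (cis s)) = int CARD('n) * beta1 (cis u) (cis c1) (cis s) \<and>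
        N \<inter> \<phi> (cis s) = {0} \<and> C1 \<inter> \<phi> (cis s) = {0}"
    using c1(1) h6'[OF lN] h6'[OF lC1]
    by eventually_elim (simp add: G_def N_def C1_def uD c1D Deq Int_commute)
  have good2: "AE s in lebesgue. s \<in> {0..<2*pi} \<longrightarrow>
        maslov N C2 (\<phi> (cis s)) = int CARD('n) * beta1 (cis u) (cis c2) (cis s) \<and>
        N \<inter> \<phi> (cis s) = {0} \<and> C2 \<inter> \<phi> (cis s) = {0}"
    using c2(1) h6'[OF lN] h6'[OF lC2]
    by eventually_elim (simp add: G_def N_def C2_def uD c2D Deq Int_commute)
  obtain e0 where e0: "e0 > 0" and near: "\<forall>z t. dist (cis z) (cis t) < e0 \<longrightarrow> (\<exists>z'. cis z' = cis z \<and> \<bar>z' - t\<bar> < \<mu>)"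
    using cis_near[OF mu0] by blast
  have uu: "(t3 + t1 + 2*pi) / 2 - \<mu> < u'" "u' < (t3 + t1 + 2*pi) / 2 + \<mu>" using u'(2) by linarith+
  have cc1: "(t1 + t2) / 2 - \<mu> < c1'" "c1' < (t1 + t2) / 2 + \<mu>" using c1'(2) by linarith+
  have cc2: "(t2 + t3) / 2 - \<mu> < c2'" "c2' < (t2 + t3) / 2 + \<mu>" using c2'(2) by linarith+
  have A1a: "t1 + \<mu> < c1'" using cc1 mu1 by (simp add: field_simps)
  have A1b: "c1' < t2 - \<mu>" using cc1 mu1 by (simp add: field_simps)
  have A2a: "t2 + \<mu> < c2'" using cc2 mu1 by (simp add: field_simps)
  have A2b: "c2' < t3 - \<mu>" using cc2 mu1 by (simp add: field_simps)
  have A3a: "t3 + \<mu> < u'" using uu mu1 by (simp add: field_simps)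
  have A3b: "u' < t1 + 2*pi - \<mu>" using uu mu1 by (simp add: field_simps)
  note A1 = A1a A1b and A2 = A2a A2b and A3 = A3a A3b
  have orient: "\<exists>e0>0. \<forall>s. dist (cis s) (cis ti) < e0 \<longrightarrow> beta1 (cis u) (cis c) (cis s) = \<sigma>"
    if hyp: "\<And>s'. ti - \<mu> < s' \<Longrightarrow> s' < ti + \<mu> \<Longrightarrow> beta1 (cis u') (cis c') (cis s') = \<sigma>"
      and cc: "cis c' = cis c"
    for ti c c' \<sigma>
  proof (rule exI[of _ e0], intro conjI allI impI e0)
    fix s assume "dist (cis s) (cis ti) < e0"
    then obtain s' where s': "cis s' = cis s" "\<bar>s' - ti\<bar> < \<mu>" using near by blast
    have "beta1 (cis u') (cis c') (cis s') = \<sigma>" by (rule hyp) (use s'(2) in linarith)+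
    then show "beta1 (cis u) (cis c) (cis s) = \<sigma>" using s'(1) u'(1) cc by simp
  qed
  have o11: "\<exists>e0>0. \<forall>s. dist (cis s) (cis t1) < e0 \<longrightarrow> beta1 (cis u) (cis c1) (cis s) = -1"
  proof (rule orient[OF _ c1'(1)])
    fix s' assume "t1 - \<mu> < s'" "s' < t1 + \<mu>"
    then show "beta1 (cis u') (cis c1') (cis s') = -1"
      by (intro beta1_neg) (use A1 A2 A3 mu0 in linarith)+
  qed
  have o12: "\<exists>e0>0. \<forall>s. dist (cis s) (cis t2) < e0 \<longrightarrow> beta1 (cis u) (cis c1) (cis s) = 1"
  proof (rule orient[OF _ c1'(1)])
    fix s' assume "t2 - \<mu> < s'" "s' < t2 + \<mu>"
    then have "beta1 (cis (u' - 2 * pi)) (cis c1') (cis s') = 1"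
      by (intro beta1_pos) (use A1 A2 A3 mu0 in linarith)+
    then show "beta1 (cis u') (cis c1') (cis s') = 1" using cisp by simp
  qed
  have o13: "\<exists>e0>0. \<forall>s. dist (cis s) (cis t3) < e0 \<longrightarrow> beta1 (cis u) (cis c1) (cis s) = 1"
  proof (rule orient[OF _ c1'(1)])
    fix s' assume "t3 - \<mu> < s'" "s' < t3 + \<mu>"
    then have "beta1 (cis (u' - 2 * pi)) (cis c1') (cis s') = 1"
      by (intro beta1_pos) (use A1 A2 A3 mu0 in linarith)+
    then show "beta1 (cis u') (cis c1') (cis s') = 1" using cisp by simp
  qed
  have o22: "\<exists>e0>0. \<forall>s. dist (cis s) (cis t2) < e0 \<longrightarrow> beta1 (cis u) (cis c2) (cis s) = -1"
  proof (rule orient[OF _ c2'(1)])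
    fix s' assume "t2 - \<mu> < s'" "s' < t2 + \<mu>"
    then show "beta1 (cis u') (cis c2') (cis s') = -1"
      by (intro beta1_neg) (use A1 A2 A3 mu0 in linarith)+
  qed
  have o23: "\<exists>e0>0. \<forall>s. dist (cis s) (cis t3) < e0 \<longrightarrow> beta1 (cis u) (cis c2) (cis s) = 1"
  proof (rule orient[OF _ c2'(1)])
    fix s' assume "t3 - \<mu> < s'" "s' < t3 + \<mu>"
    then have "beta1 (cis (u' - 2 * pi)) (cis c2') (cis s') = 1"
      by (intro beta1_pos) (use A1 A2 A3 mu0 in linarith)+
    then show "beta1 (cis u') (cis c2') (cis s') = 1" using cisp by simp
  qed
  have s1: "\<forall>a\<in>L1. 0 \<le> hN N C1 a"
    using approx_step[OF meas ess1 lN lC1 NC1 good1 o11] by simp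
  have s2: "\<forall>a\<in>L2. 0 \<le> - hN N C1 a"
    using approx_step[OF meas ess2 lN lC1 NC1 good1 o12] by simp
  have s3: "\<forall>a\<in>L3. 0 \<le> - hN N C1 a"
    using approx_step[OF meas ess3 lN lC1 NC1 good1 o13] by simp
  have s4: "\<forall>a\<in>L2. 0 \<le> hN N C2 a"
    using approx_step[OF meas ess2 lN lC2 NC2 good2 o22] by simp
  have s5: "\<forall>a\<in>L3. 0 \<le> - hN N C2 a"
    using approx_step[OF meas ess3 lN lC2 NC2 good2 o23] by simp
  show ?thesis
    by (rule limit_triple[OF lN lC1 lC2 lL1 lL2 lL3 NC1 NC2 NL LC1 LC2 s1 s2 s3 s4 s5])
qed


theorem corollary8p5:
  fixes G :: "(complex \<times> complex) set"
    and \<rho> :: "complex \<times> complex \<Rightarrow> 'n::finite sympl \<Rightarrow> 'n sympl"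
    and \<phi> :: "complex \<Rightarrow> 'n sympl set"
  assumes "tf_cocompact_lattice G"
    and "is_rep G \<rho>"
    and "lag_measurable \<phi>"
    and "\<forall>g\<in>G. \<forall>x\<in>sphere 0 1. \<phi> (mob g x) = \<rho> g ` \<phi> x"
    and "AE p in lebesgue. p \<in> {0..<2*pi} \<times> {0..<2*pi} \<times> {0..<2*pi} \<longrightarrow>
           maslov (\<phi> (cis (fst p))) (\<phi> (cis (fst (snd p)))) (\<phi> (cis (snd (snd p))))
             = int CARD('n) * beta1 (cis (fst p)) (cis (fst (snd p))) (cis (snd (snd p)))"
    and "\<forall>L\<in>lagrangians. AE t in lebesgue. t \<in> {0..<2*pi} \<longrightarrow> \<phi> (cis t) \<inter> L = {0}"
  shows "\<forall>x1 L1 x2 L2 x3 L3. (x1, L1) \<in> ess_graph \<phi> \<and> (x2, L2) \<in> ess_graph \<phi> \<and>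
           (x3, L3) \<in> ess_graph \<phi> \<and> x1 \<noteq> x2 \<and> x2 \<noteq> x3 \<and> x1 \<noteq> x3 \<longrightarrow>
           maslov L1 L2 L3 = int CARD('n) * beta1 x1 x2 x3"
proof (intro allI impI)
  fix x1 L1 x2 L2 x3 L3
  assume H: "(x1, L1) \<in> ess_graph \<phi> \<and> (x2, L2) \<in> ess_graph \<phi> \<and>
           (x3, L3) \<in> ess_graph \<phi> \<and> x1 \<noteq> x2 \<and> x2 \<noteq> x3 \<and> x1 \<noteq> x3"
  then have e1: "(x1, L1) \<in> ess_graph \<phi>" and e2: "(x2, L2) \<in> ess_graph \<phi>"
    and e3: "(x3, L3) \<in> ess_graph \<phi>" and d: "x1 \<noteq> x2" "x2 \<noteq> x3" "x1 \<noteq> x3" by blast+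
  have n1: "norm x1 = 1" using ess_graphD(2)[OF e1] by simp
  have n2: "norm x2 = 1" using ess_graphD(2)[OF e2] by simp
  have n3: "norm x3 = 1" using ess_graphD(2)[OF e3] by simp
  show "maslov L1 L2 L3 = int CARD('n) * beta1 x1 x2 x3"
  proof (cases "ccw x1 x2 x3")
    case True
    then obtain t1 t2 t3 where t: "t1 < t2" "t2 < t3" "t3 < t1 + 2 * pi"
      and x: "x1 = cis t1" "x2 = cis t2" "x3 = cis t3"
      unfolding ccw_def by blast
    have "maslov L1 L2 L3 = int CARD('n)"
      by (rule core[OF assms(3) assms(5) assms(6) _ _ _ t]) (use e1 e2 e3 x in simp_all)
    moreover have "beta1 x1 x2 x3 = 1" using True d by (simp add: beta1_def)
    ultimately show ?thesis by simp
  next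
    case False
    then have c: "ccw x3 x2 x1" using ccw_either[OF n1 n2 n3 d] by blast
    then obtain s1 s2 s3 where s: "s1 < s2" "s2 < s3" "s3 < s1 + 2 * pi"
      and x: "x3 = cis s1" "x2 = cis s2" "x1 = cis s3"
      unfolding ccw_def by blast
    have "maslov L3 L2 L1 = int CARD('n)"
      by (rule core[OF assms(3) assms(5) assms(6) _ _ _ s]) (use e1 e2 e3 x in simp_all)
    then have "maslov L1 L2 L3 = - int CARD('n)" using maslov_antisym[of L1 L2 L3] by simp
    moreover have "beta1 x1 x2 x3 = -1" using False c d by (simp add: beta1_def)
    ultimately show ?thesis by simp
  qed
qed


end
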